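(* Let $n\ge1$ and $\widetilde Z(n;\mathbf x,\mathbf y)=\big[\prod_{i=1}^n x_i^{n-1}y_i^{n-1}\big]Z(n;\mathbf x,\mathbf y)$. Let $S(n;x_n,y_n)$ be defined by the requirement that $\big[\prod_{i=1}^{n-1}x_i^{2(n-1)}\big]S(n;x_n,y_n)$ is the sum of those monomials of $\widetilde Z(n;\mathbf x,\mathbf y)$ in which each $x_i$, $i\le n-1$, has exponent $2(n-1)$ and none of $y_1,\dots,y_{n-1}$ occurs. Then \[ S(n;x_n,y_n)=\Big[\prod_{i=1}^{n-1}\sigma(a^{2i})\Big]\Big(\sigma(a^{2n})x_n^{2(n-1)}-\sigma(a^{2(n-1)})x_n^{2(n-2)}y_n^2\Big). \]
   Context: Notation: $\bar z=z^{-1}$, $\sigma(z)=z-z^{-1}$; $a$ is a fixed nonzero parameter. Vertex weights: at a vertex where a horizontal and a vertical line cross, the four incident edges are oriented with exactly two pointing in. Type 1: horizontal edges in, vertical out; type 2: horizontal out, vertical in; type 3: horizontal right, vertical up; type 4: horizontal left, vertical down; type 5: horizontal left, vertical up; type 6: horizontal right, vertical down. A vertex with spectral parameter $z$ has weight $\sigma(a^2)$ (types 1,2), $\sigma(az)$ (types 3,4), $\sigma(a\bar z)$ (types 5,6). $Z(n;\mathbf x,\mathbf y)$, $\mathbf x=(x_1,\dots,x_n)$, $\mathbf y=(y_1,\dots,y_n)$, is the sum over all states (orientations of internal edges satisfying the two-in rule at every vertex) of the product of vertex weights, on the $n\times n$ grid of vertices $(i,j)$ (row $i$ from the top, column $j$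 from the left), vertex $(i,j)$ having parameter $x_i\bar y_j$, with horizontal boundary edges pointing into the grid and vertical boundary edges pointing out of it (domain-wall boundary). *)

theory Defs
  imports Complex_Main "HOL-Library.Poly_Mapping" "HOL-Library.FuncSet"
begin

datatype var = X nat | Y nat

text \<open>Laurent monomials are finitely supported maps var to int (exponents);
  Laurent polynomials in x, y with complex coefficients are finitely supported
  maps from monomials to complex numbers (multiplication = convolution).\<close>
type_synonym lpoly = "(var \<Rightarrow>\<^sub>0 int) \<Rightarrow>\<^sub>0 complex"

definition sigma :: "complex \<Rightarrow> complex" where
  "sigma z = z - inverse z"

definition lconst :: "complex \<Rightarrow> lpoly" where
  "lconst c = Poly_Mapping.single 0 c"

definition xpow :: "nat \<Rightarrow> int \<Rightarrow> lpoly" where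
  "xpow i e = Poly_Mapping.single (Poly_Mapping.single (X i) e) 1"

definition ypow :: "nat \<Rightarrow> int \<Rightarrow> lpoly" where
  "ypow j e = Poly_Mapping.single (Poly_Mapping.single (Y j) e) 1"

text \<open>sigma(a * z) with z = x_i * y_j^{-1}, as a Laurent polynomial:
  a x_i y_j^{-1} - a^{-1} x_i^{-1} y_j\<close>
definition sig_az :: "complex \<Rightarrow> nat \<Rightarrow> nat \<Rightarrow> lpoly" where
  "sig_az a i j = lconst a * xpow i 1 * ypow j (-1) - lconst (inverse a) * xpow i (-1) * ypow j 1"

text \<open>sigma(a * zbar) with z = x_i * y_j^{-1}: a x_i^{-1} y_j - a^{-1} x_i y_j^{-1}\<close>
definition sig_azbar :: "complex \<Rightarrow> nat \<Rightarrow> nat \<Rightarrow> lpoly" where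
  "sig_azbar a i j = lconst a * xpow i (-1) * ypow j 1 - lconst (inverse a) * xpow i 1 * ypow j (-1)"

text \<open>H (i,j), for row i in 1..n and j in 0..n, is the horizontal edge
  of row i between columns j and j+1 (j = 0: left boundary, j = n: right boundary);
  H (i,j) = True means it points right.
  V (i,j), for i in 0..n and column j in 1..n, is the vertical edge of column j between
  rows i and i+1 (i = 0: top boundary, i = n: bottom boundary; rows counted from the top);
  V (i,j) = True means it points up.\<close>

definition hedges :: "nat \<Rightarrow> (nat \<times> nat) set" where
  "hedges n = {1..n} \<times> {0..n}"

definition vedges :: "nat \<Rightarrow> (nat \<times> nat) set" where
  "vedges n = {0..n} \<times> {1..n}"

definition in_count :: "(nat \<times> nat \<Rightarrow> bool) \<Rightarrow> (nat \<times> nat \<Rightarrow> bool) \<Rightarrow> nat \<Rightarrow> nat \<Rightarrow> nat" where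
  "in_count H V i j =
     (if H (i, j - 1) then 1 else 0) + (if \<not> H (i, j) then 1 else 0)
   + (if \<not> V (i - 1, j) then 1 else 0) + (if V (i, j) then 1 else 0)"

text \<open>Domain-wall states: horizontal boundary edges point into the grid, vertical
  boundary edges point out of it, and the two-in rule holds at every vertex.\<close>
definition dw_states :: "nat \<Rightarrow> ((nat \<times> nat \<Rightarrow> bool) \<times> (nat \<times> nat \<Rightarrow> bool)) set" where
  "dw_states n = {(H, V).
      H \<in> hedges n \<rightarrow>\<^sub>E (UNIV :: bool set) \<and> V \<in> vedges n \<rightarrow>\<^sub>E (UNIV :: bool set)
    \<and> (\<forall>i\<in>{1..n}. H (i, 0) \<and> \<not> H (i, n))
    \<and> (\<forall>j\<in>{1..n}. V (0, j) \<and> \<not> V (n, j))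
    \<and> (\<forall>i\<in>{1..n}. \<forall>j\<in>{1..n}. in_count H V i j = 2)}"

text \<open>Weight of vertex (i,j) (spectral parameter x_i ybar_j) in the state (H,V):
  types 1,2 (left and right horizontal edges oriented differently): sigma(a^2);
  types 3,4 (horizontal right & vertical up, or horizontal left & vertical down): sigma(a z);
  types 5,6 (horizontal left & vertical up, or horizontal right & vertical down): sigma(a zbar).\<close>
definition vweight :: "complex \<Rightarrow> (nat \<times> nat \<Rightarrow> bool) \<Rightarrow> (nat \<times> nat \<Rightarrow> bool) \<Rightarrow> nat \<Rightarrow> nat \<Rightarrow> lpoly" where
  "vweight a H V i j =
     (if H (i, j - 1) \<noteq> H (i, j) then lconst (sigma (a^2))
      else if H (i, j) = V (i, j) then sig_az a i j
      else sig_azbar a i j)"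

definition Zpf :: "complex \<Rightarrow> nat \<Rightarrow> lpoly" where
  "Zpf a n = (\<Sum>(H, V)\<in>dw_states n. \<Prod>i\<in>{1..n}. \<Prod>j\<in>{1..n}. vweight a H V i j)"

definition Ztilde :: "complex \<Rightarrow> nat \<Rightarrow> lpoly" where
  "Ztilde a n = (\<Prod>i\<in>{1..n}. xpow i (int n - 1) * ypow i (int n - 1)) * Zpf a n"

definition select_part :: "nat \<Rightarrow> lpoly \<Rightarrow> lpoly" where
  "select_part n P = Poly_Mapping.mapp
     (\<lambda>m c. if (\<forall>i\<in>{1..n-1}. Poly_Mapping.lookup m (X i) = 2 * (int n - 1) \<and> Poly_Mapping.lookup m (Y i) = 0)
            then c else 0) P"

end

theory Submission
  imports Defs "HOL-Combinatorics.Multiset_Permutations"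
begin

definition Lf :: "nat \<Rightarrow> (var \<Rightarrow>\<^sub>0 int) \<Rightarrow> int" where
  "Lf n m = (\<Sum>i\<in>{1..n-1}. Poly_Mapping.lookup m (X i) - Poly_Mapping.lookup m (Y i))"

lemma Lf_add: "Lf n (m1 + m2) = Lf n m1 + Lf n m2"
  by (simp add: Lf_def lookup_add sum.distrib[symmetric] algebra_simps)

lemma Lf_zero[simp]: "Lf n 0 = 0"
  by (simp add: Lf_def)

definition Lle :: "nat \<Rightarrow> lpoly \<Rightarrow> int \<Rightarrow> bool" where
  "Lle n P d \<longleftrightarrow> (\<forall>m\<in>Poly_Mapping.keys P. Lf n m \<le> d)"

definition Llt :: "nat \<Rightarrow> lpoly \<Rightarrow> int \<Rightarrow> bool" where
  "Llt n P d \<longleftrightarrow> (\<forall>m\<in>Poly_Mapping.keys P. Lf n m < d)"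

lemma Lle_mult: "Lle n P d1 \<Longrightarrow> Lle n Q d2 \<Longrightarrow> Lle n (P * Q) (d1 + d2)"
  unfolding Lle_def using keys_mult[of P Q] by (force simp: Lf_add intro: add_mono)

lemma Llt_mult1: "Llt n P d1 \<Longrightarrow> Lle n Q d2 \<Longrightarrow> Llt n (P * Q) (d1 + d2)"
  unfolding Lle_def Llt_def using keys_mult[of P Q] by (force simp: Lf_add intro: add_less_le_mono)

lemma Llt_mult2: "Lle n P d1 \<Longrightarrow> Llt n Q d2 \<Longrightarrow> Llt n (P * Q) (d1 + d2)"
  unfolding Lle_def Llt_def using keys_mult[of P Q] by (force simp: Lf_add intro: add_le_less_mono)

lemma keys_diff_sub: "Poly_Mapping.keys (P - Q) \<subseteq> Poly_Mapping.keys P \<union> Poly_Mapping.keys (Q::lpoly)"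
  by (auto simp: in_keys_iff lookup_minus)

lemma Llt_add: "Llt n P d \<Longrightarrow> Llt n Q d \<Longrightarrow> Llt n (P + Q) d"
  unfolding Llt_def using keys_add[of P Q] by blast

lemma Lle_add: "Lle n P d \<Longrightarrow> Lle n Q d \<Longrightarrow> Lle n (P + Q) d"
  unfolding Lle_def using keys_add[of P Q] by blast

lemma Llt_diff: "Llt n P d \<Longrightarrow> Llt n Q d \<Longrightarrow> Llt n (P - Q) d"
  unfolding Llt_def using keys_diff_sub[of P Q] by blast

lemma Lle_one: "Lle n 1 0"
  by (simp add: Lle_def)

lemma Llt_zero: "Llt n 0 d"
  by (simp add: Llt_def)

lemma Llt_Lle: "Llt n P d \<Longrightarrow> Lle n P d"
  by (auto simp: Llt_def Lle_def less_imp_le)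

lemma Lle_Llt: "Lle n P d \<Longrightarrow> d < d' \<Longrightarrow> Llt n P d'"
  by (auto simp: Llt_def Lle_def)

lemma Lle_single: "Lf n m \<le> d \<Longrightarrow> Lle n (Poly_Mapping.single m c) d"
  by (simp add: Lle_def)

lemma Llt_single: "Lf n m < d \<Longrightarrow> Llt n (Poly_Mapping.single m c) d"
  by (simp add: Llt_def)

lemma prod_expand:
  assumes "finite S" "\<And>v. v \<in> S \<Longrightarrow> Lle n (t v) (d v) \<and> Llt n (f v - t v) (d v)"
  shows "Lle n (\<Prod>v\<in>S. t v) (\<Sum>v\<in>S. d v) \<and> Llt n ((\<Prod>v\<in>S. f v) - (\<Prod>v\<in>S. t v)) (\<Sum>v\<in>S. d v)"
  using assms
proof (induction S rule: finite_induct)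
  case empty
  then show ?case by (simp add: Lle_one Llt_zero)
next
  case (insert v S)
  let ?F = "\<Prod>v\<in>S. f v" and ?T = "\<Prod>v\<in>S. t v"
  have IH: "Lle n ?T (sum d S)" "Llt n (?F - ?T) (sum d S)" using insert by auto
  have hv: "Lle n (t v) (d v)" "Llt n (f v - t v) (d v)" using insert by auto
  have F: "Lle n ?F (sum d S)"
    using Lle_add[OF IH(1) Llt_Lle[OF IH(2)]] by simp
  have eq: "f v * ?F - t v * ?T = (f v - t v) * ?F + t v * (?F - ?T)"
    by (simp add: algebra_simps)
  have "Llt n (f v * ?F - t v * ?T) (d v + sum d S)"
    unfolding eq by (rule Llt_add[OF Llt_mult1[OF hv(2) F] Llt_mult2[OF hv(1) IH(2)]])
  moreover have "Lle n (t v * ?T) (d v + sum d S)" by (rule Lle_mult[OF hv(1) IH(1)])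
  ultimately show ?case using insert by simp
qed

definition cnd :: "nat \<Rightarrow> (var \<Rightarrow>\<^sub>0 int) \<Rightarrow> bool" where
  "cnd n m \<longleftrightarrow> (\<forall>i\<in>{1..n-1}. Poly_Mapping.lookup m (X i) = 2 * (int n - 1) \<and> Poly_Mapping.lookup m (Y i) = 0)"

lemma lookup_select: "Poly_Mapping.lookup (select_part n P) m = (if cnd n m then Poly_Mapping.lookup P m else 0)"
  by (auto simp: select_part_def lookup_mapp cnd_def when_def in_keys_iff)

lemma select_add: "select_part n (P + Q) = select_part n P + select_part n Q"
  by (rule poly_mapping_eqI) (simp add: lookup_select lookup_add)

lemma select_diff: "select_part n (P - Q) = select_part n P - select_part n Q"
  by (rule poly_mapping_eqI) (simp add: lookup_select lookup_minus)

lemma select_sum: "select_part n (\<Sum>s\<in>A. f s) = (\<Sum>s\<in>A. select_part n (f s))"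
  by (rule poly_mapping_eqI) (simp add: lookup_select lookup_sum)

lemma select_single: "select_part n (Poly_Mapping.single m c) = (if cnd n m then Poly_Mapping.single m c else 0)"
  by (rule poly_mapping_eqI) (simp add: lookup_select lookup_single when_def)

definition Dn :: "nat \<Rightarrow> int" where "Dn n = (int n - 1) * (2 * (int n - 1))"

lemma cnd_Lf: assumes "n \<ge> 1" "cnd n m" shows "Lf n m = Dn n"
proof -
  have "Lf n m = (\<Sum>i\<in>{1..n-1}. 2 * (int n - 1))"
    unfolding Lf_def using assms(2) by (intro sum.cong) (auto simp: cnd_def)
  also have "\<dots> = Dn n" using assms(1) by (simp add: Dn_def of_nat_diff)
  finally show ?thesis .
qed

lemma select_Llt: assumes "n \<ge> 1" "Llt n P (Dn n)" shows "select_part n P = 0"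
proof (rule poly_mapping_eqI)
  fix m
  show "Poly_Mapping.lookup (select_part n P) m = Poly_Mapping.lookup 0 m"
  proof (cases "cnd n m \<and> m \<in> Poly_Mapping.keys P")
    case True
    then show ?thesis using assms cnd_Lf[OF assms(1)] by (auto simp: Llt_def)
  next
    case False
    then show ?thesis by (auto simp: lookup_select in_keys_iff)
  qed
qed


definition hh :: "complex \<Rightarrow> nat \<Rightarrow> nat \<Rightarrow> complex" where
  "hh a p j = (if p < j then a else - inverse a)"

definition ww :: "complex \<Rightarrow> nat \<Rightarrow> nat \<Rightarrow> complex" where
  "ww a p j = (if p < j then a^2 else inverse a ^ 2)"

definition pil :: "nat list \<Rightarrow> nat \<Rightarrow> nat" where
  "pil xs i = xs ! (length xs - i)"

definition cf :: "complex \<Rightarrow> nat list \<Rightarrow> nat \<Rightarrow> nat \<Rightarrow> complex" where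
  "cf a xs i j = (if j = pil xs i then 1
      else if (j < pil xs i) = (j \<notin> set (drop (length xs - i) xs)) then a else - inverse a)"

definition Kl :: "complex \<Rightarrow> nat list \<Rightarrow> complex" where
  "Kl a xs = (\<Prod>i\<in>{1..length xs}. \<Prod>j\<in>set xs. cf a xs i j)"

lemma prod_pil:
  assumes "distinct xs"
  shows "(\<Prod>i\<in>{1..length xs}. f (pil xs i)) = (\<Prod>j\<in>set xs. f j)"
proof -
  let ?m = "length xs"
  have "(\<Prod>i\<in>{1..?m}. f (pil xs i)) = (\<Prod>k\<in>{..<?m}. f (xs ! k))"
    unfolding pil_def
    by (rule prod.reindex_bij_witness[where i="\<lambda>k. ?m - k" and j="\<lambda>i. ?m - i"]) auto
  also have "\<dots> = (\<Prod>j\<in>set xs. f j)"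
    using prod.reindex_bij_betw[OF bij_betw_nth[OF assms refl refl], of f] by simp
  finally show ?thesis .
qed

lemma pil_Cons: "1 \<le> i \<Longrightarrow> i \<le> length xs \<Longrightarrow> pil (p # xs) i = pil xs i"
  by (simp add: pil_def Suc_diff_le)

lemma cf_Cons: "1 \<le> i \<Longrightarrow> i \<le> length xs \<Longrightarrow> cf a (p # xs) i j = cf a xs i j"
  by (simp add: cf_def pil_Cons Suc_diff_le)

lemma pil_in: "1 \<le> i \<Longrightarrow> i \<le> length xs \<Longrightarrow> pil xs i \<in> set xs"
  by (simp add: pil_def)

lemma Kl_Cons:
  assumes "distinct (p # xs)"
  shows "Kl a (p # xs) = Kl a xs * (\<Prod>j\<in>set xs. ww a p j)"
proof -
  let ?m = "length xs"
  have pn: "p \<notin> set xs" and dx: "distinct xs" using assms by auto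
  have row_top: "(\<Prod>j\<in>set (p#xs). cf a (p#xs) (Suc ?m) j) = (\<Prod>j\<in>set xs. hh a p j)"
  proof -
    have "(\<Prod>j\<in>set (p#xs). cf a (p#xs) (Suc ?m) j) = cf a (p#xs) (Suc ?m) p * (\<Prod>j\<in>set xs. cf a (p#xs) (Suc ?m) j)"
      using pn by simp
    also have "cf a (p#xs) (Suc ?m) p = 1" by (simp add: cf_def pil_def)
    also have "(\<Prod>j\<in>set xs. cf a (p#xs) (Suc ?m) j) = (\<Prod>j\<in>set xs. hh a p j)"
      using pn by (intro prod.cong) (auto simp: cf_def pil_def hh_def)
    finally show ?thesis by simp
  qed
  have rows: "(\<Prod>i\<in>{1..?m}. \<Prod>j\<in>set (p#xs). cf a (p#xs) i j)
      = (\<Prod>i\<in>{1..?m}. hh a p (pil xs i)) * Kl a xs"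
  proof -
    have "(\<Prod>i\<in>{1..?m}. \<Prod>j\<in>set (p#xs). cf a (p#xs) i j)
        = (\<Prod>i\<in>{1..?m}. hh a p (pil xs i) * (\<Prod>j\<in>set xs. cf a xs i j))"
    proof (rule prod.cong[OF refl])
      fix i assume i: "i \<in> {1..?m}"
      have "(\<Prod>j\<in>set (p#xs). cf a (p#xs) i j) = cf a xs i p * (\<Prod>j\<in>set xs. cf a xs i j)"
        using pn i by (simp add: cf_Cons)
      moreover have "cf a xs i p = hh a p (pil xs i)"
      proof -
        have "pil xs i \<in> set xs" using i pil_in by auto
        moreover have "p \<notin> set (drop (?m - i) xs)" using pn by (meson in_set_dropD)
        ultimately show ?thesis using pn by (auto simp: cf_def hh_def)
      qed
      ultimately show "(\<Prod>j\<in>set (p#xs). cf a (p#xs) i j) = hh a p (pil xs i) * (\<Prod>j\<in>set xs. cf a xs i j)"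
        by simp
    qed
    also have "\<dots> = (\<Prod>i\<in>{1..?m}. hh a p (pil xs i)) * Kl a xs"
      by (simp add: prod.distrib Kl_def)
    finally show ?thesis .
  qed
  have "Kl a (p # xs) = (\<Prod>j\<in>set (p#xs). cf a (p#xs) (Suc ?m) j) * (\<Prod>i\<in>{1..?m}. \<Prod>j\<in>set (p#xs). cf a (p#xs) i j)"
    unfolding Kl_def by (simp add: atLeastAtMostSuc_conv)
  also have "\<dots> = (\<Prod>j\<in>set xs. hh a p j) * (\<Prod>j\<in>set xs. hh a p j) * Kl a xs"
    unfolding row_top rows prod_pil[OF dx] by simp
  also have "\<dots> = Kl a xs * (\<Prod>j\<in>set xs. ww a p j)"
  proof -
    have e: "(\<Prod>j\<in>set xs. hh a p j) * (\<Prod>j\<in>set xs. hh a p j) = (\<Prod>j\<in>set xs. ww a p j)"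
      unfolding prod.distrib[symmetric] by (intro prod.cong refl) (simp add: hh_def ww_def power2_eq_square)
    show ?thesis by (metis e mult.commute)
  qed
  finally show ?thesis .
qed

lemma sum_perms:
  assumes "finite W" "W \<noteq> {}"
  shows "(\<Sum>xs\<in>permutations_of_set W. g (hd xs) * Kl a xs)
       = (\<Sum>p\<in>W. g p * (\<Prod>j\<in>W-{p}. ww a p j) * (\<Sum>ys\<in>permutations_of_set (W-{p}). Kl a ys))"
proof -
  have "(\<Sum>xs\<in>permutations_of_set W. g (hd xs) * Kl a xs)
      = (\<Sum>p\<in>W. \<Sum>xs\<in>(#) p ` permutations_of_set (W - {p}). g (hd xs) * Kl a xs)"
    unfolding permutations_of_set_nonempty[OF assms(2)]
    by (rule sum.UNION_disjoint) (use assms in auto)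
  also have "\<dots> = (\<Sum>p\<in>W. \<Sum>ys\<in>permutations_of_set (W - {p}). g p * Kl a (p # ys))"
    by (subst sum.reindex) (auto intro: sum.cong)
  also have "\<dots> = (\<Sum>p\<in>W. \<Sum>ys\<in>permutations_of_set (W - {p}). g p * (\<Prod>j\<in>W-{p}. ww a p j) * Kl a ys)"
  proof (intro sum.cong refl)
    fix p ys assume "p \<in> W" "ys \<in> permutations_of_set (W - {p})"
    then have "distinct (p # ys)" "set ys = W - {p}" by (auto dest: permutations_of_setD)
    then show "g p * Kl a (p # ys) = g p * (\<Prod>j\<in>W-{p}. ww a p j) * Kl a ys"
      by (simp add: Kl_Cons)
  qed
  also have "\<dots> = (\<Sum>p\<in>W. g p * (\<Prod>j\<in>W-{p}. ww a p j) * (\<Sum>ys\<in>permutations_of_set (W-{p}). Kl a ys))"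
    by (simp add: sum_distrib_left)
  finally show ?thesis .
qed

fun Sg :: "complex \<Rightarrow> nat \<Rightarrow> complex" where
  "Sg a 0 = 1"
| "Sg a (Suc k) = a^2 * Sg a k + (inverse a ^ 2) ^ Suc k"

fun Qf :: "complex \<Rightarrow> nat \<Rightarrow> complex" where
  "Qf a 0 = 1"
| "Qf a (Suc k) = Sg a k * Qf a k"

lemma Sum_ww_butmax:
  assumes "finite W" "\<And>p. p \<in> W \<Longrightarrow> p < M"
  shows "(\<Sum>p\<in>W. \<Prod>j\<in>insert M W - {p}. ww a p j) = a^2 * (\<Sum>p\<in>W. \<Prod>j\<in>W-{p}. ww a p j)"
proof -
  have "(\<Sum>p\<in>W. \<Prod>j\<in>insert M W - {p}. ww a p j) = (\<Sum>p\<in>W. a^2 * (\<Prod>j\<in>W-{p}. ww a p j))"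
  proof (intro sum.cong refl)
    fix p assume p: "p \<in> W"
    have "M \<notin> W" using assms(2) by blast
    then have "insert M W - {p} = insert M (W - {p})" using p assms(2)[OF p] by auto
    moreover have "M \<notin> W - {p}" using \<open>M \<notin> W\<close> by auto
    ultimately show "(\<Prod>j\<in>insert M W - {p}. ww a p j) = a^2 * (\<Prod>j\<in>W-{p}. ww a p j)"
      using assms p by (simp add: ww_def)
  qed
  then show ?thesis by (simp add: sum_distrib_left)
qed

lemma Sum_ww:
  assumes "finite W" "W \<noteq> {}"
  shows "(\<Sum>p\<in>W. \<Prod>j\<in>W-{p}. ww a p j) = Sg a (card W - 1)"
  using assms
proof (induction "card W" arbitrary: W rule: less_induct)
  case less
  define M where "M = Max W"
  define W' where "W' = W - {M}"
  have MW: "M \<in> W" using less.prems M_def by auto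
  have W: "W = insert M W'" and MW': "M \<notin> W'" and fW': "finite W'" using MW less.prems by (auto simp: W'_def)
  have lt: "\<And>p. p \<in> W' \<Longrightarrow> p < M"
    using less.prems by (auto simp: W'_def M_def) (meson Max_ge le_neq_implies_less)
  show ?case
  proof (cases "W' = {}")
    case True
    then show ?thesis using W by simp
  next
    case False
    have "(\<Sum>p\<in>W. \<Prod>j\<in>W-{p}. ww a p j) = (\<Prod>j\<in>W'. ww a M j) + (\<Sum>p\<in>W'. \<Prod>j\<in>insert M W' - {p}. ww a p j)"
      unfolding W using fW' MW' by (simp add: sum.insert)
    also have "(\<Prod>j\<in>W'. ww a M j) = (\<Prod>j\<in>W'. inverse a ^ 2)"
      by (intro prod.cong refl) (auto dest: lt simp: ww_def)
    also have "\<dots> = (inverse a ^ 2) ^ card W'" by simp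
    also have "(\<Sum>p\<in>W'. \<Prod>j\<in>insert M W' - {p}. ww a p j) = a^2 * Sg a (card W' - 1)"
      using Sum_ww_butmax[OF fW' lt] less.hyps[of W'] False fW' W MW' by (simp add: card_insert_if)
    finally have "(\<Sum>p\<in>W. \<Prod>j\<in>W-{p}. ww a p j) = a^2 * Sg a (card W' - 1) + (inverse a ^ 2) ^ card W'"
      by simp
    moreover have "card W' = Suc (card W' - 1)" using False fW' by (simp add: card_gt_0_iff)
    moreover have "card W - 1 = card W'" using W fW' MW' by simp
    ultimately show ?thesis by (metis Sg.simps(2))
  qed
qed

lemma sum_Kl:
  assumes "finite W"
  shows "(\<Sum>xs\<in>permutations_of_set W. Kl a xs) = Qf a (card W)"
  using assms
proof (induction "card W" arbitrary: W rule: less_induct)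
  case less
  show ?case
  proof (cases "W = {}")
    case True
    then show ?thesis by (simp add: Kl_def)
  next
    case False
    have "(\<Sum>xs\<in>permutations_of_set W. Kl a xs) = (\<Sum>xs\<in>permutations_of_set W. 1 * Kl a xs)" by simp
    also have "\<dots> = (\<Sum>p\<in>W. 1 * (\<Prod>j\<in>W-{p}. ww a p j) * (\<Sum>ys\<in>permutations_of_set (W-{p}). Kl a ys))"
      by (rule sum_perms[OF less.prems False])
    also have "\<dots> = (\<Sum>p\<in>W. (\<Prod>j\<in>W-{p}. ww a p j) * Qf a (card W - 1))"
    proof (intro sum.cong refl)
      fix p assume p: "p \<in> W"
      have "card (W - {p}) < card W" using card_Diff1_less[OF less.prems p] .
      then show "1 * (\<Prod>j\<in>W-{p}. ww a p j) * (\<Sum>ys\<in>permutations_of_set (W-{p}). Kl a ys) = (\<Prod>j\<in>W-{p}. ww a p j) * Qf a (card W - 1)"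
        using less.hyps[of "W - {p}"] less.prems p by (simp add: card_Diff_singleton)
    qed
    also have "\<dots> = Sg a (card W - 1) * Qf a (card W - 1)"
      unfolding sum_distrib_right[symmetric] Sum_ww[OF less.prems False] ..
    also have "\<dots> = Qf a (card W)"
    proof -
      obtain k where "card W = Suc k" using False less.prems by (metis card_0_eq not0_implies_Suc)
      then show ?thesis by simp
    qed
    finally show ?thesis .
  qed
qed

lemma sigma_Sg:
  assumes "a \<noteq> 0"
  shows "sigma (a^2) * Sg a k = sigma (a ^ (2 * Suc k))"
proof (induction k)
  case 0
  then show ?case by simp
next
  case (Suc k)
  define b where "b = a^2"
  define c where "c = inverse a ^ 2"
  have bc: "sigma (a^2) = b - c" "\<And>k. sigma (a ^ (2 * k)) = b^k - c^k"
    by (simp_all add: sigma_def b_def c_def power_mult power_inverse)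
  have "sigma (a^2) * Sg a (Suc k) = b * (sigma (a^2) * Sg a k) + (b - c) * c ^ Suc k"
    by (simp only: Sg.simps bc(1)) (simp add: b_def c_def algebra_simps)
  also have "\<dots> = b * (b ^ Suc k - c ^ Suc k) + (b - c) * c ^ Suc k"
    using Suc.IH bc(2)[of "Suc k"] by simp
  also have "\<dots> = b ^ Suc (Suc k) - c ^ Suc (Suc k)" by (simp add: algebra_simps)
  also have "\<dots> = sigma (a ^ (2 * Suc (Suc k)))" using bc(2)[of "Suc (Suc k)"] by simp
  finally show ?case .
qed

lemma sigma_Qf:
  assumes "a \<noteq> 0"
  shows "sigma (a^2) ^ m * Qf a m = (\<Prod>i\<in>{1..m}. sigma (a ^ (2 * i)))"
proof (induction m)
  case 0
  then show ?case by simp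
next
  case (Suc m)
  have "sigma (a^2) ^ Suc m * Qf a (Suc m) = (sigma (a^2) ^ m * Qf a m) * (sigma (a^2) * Sg a m)"
    by (simp add: algebra_simps)
  also have "\<dots> = (\<Prod>i\<in>{1..m}. sigma (a ^ (2 * i))) * sigma (a ^ (2 * Suc m))"
    using Suc sigma_Sg[OF assms] by simp
  finally show ?case by (simp add: atLeastAtMostSuc_conv mult.commute)
qed


definition cv :: "(nat \<times> nat \<Rightarrow> bool) \<Rightarrow> nat \<Rightarrow> nat \<Rightarrow> bool" where
  "cv H i j \<longleftrightarrow> H (i, j - 1) \<noteq> H (i, j)"

definition rowset :: "(nat \<times> nat \<Rightarrow> bool) \<Rightarrow> nat \<Rightarrow> nat \<Rightarrow> nat set" where
  "rowset H n i = {j\<in>{1..n}. cv H i j}"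

definition colset :: "(nat \<times> nat \<Rightarrow> bool) \<Rightarrow> nat \<Rightarrow> nat \<Rightarrow> nat set" where
  "colset H n j = {i\<in>{1..n}. cv H i j}"

lemma ice_int:
  assumes "in_count H V i j = 2"
  shows "(of_bool (H (i, j - 1)) - of_bool (H (i, j)) :: int) = of_bool (V (i - 1, j)) - of_bool (V (i, j))"
  using assms unfolding in_count_def
  by (cases "H (i, j - 1)"; cases "H (i, j)"; cases "V (i - 1, j)"; cases "V (i, j)") simp_all

lemma cv_V:
  assumes "in_count H V i j = 2"
  shows "cv H i j \<longleftrightarrow> V (i - 1, j) \<noteq> V (i, j)"
  using assms unfolding in_count_def cv_def
  by (cases "H (i, j - 1)"; cases "H (i, j)"; cases "V (i - 1, j)"; cases "V (i, j)") simp_all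

lemma dwD:
  assumes "(H, V) \<in> dw_states n"
  shows "\<And>i. i \<in> {1..n} \<Longrightarrow> H (i, 0)" "\<And>i. i \<in> {1..n} \<Longrightarrow> \<not> H (i, n)"
    "\<And>j. j \<in> {1..n} \<Longrightarrow> V (0, j)" "\<And>j. j \<in> {1..n} \<Longrightarrow> \<not> V (n, j)"
    "\<And>i j. i \<in> {1..n} \<Longrightarrow> j \<in> {1..n} \<Longrightarrow> in_count H V i j = 2"
    "H \<in> hedges n \<rightarrow>\<^sub>E (UNIV :: bool set)" "V \<in> vedges n \<rightarrow>\<^sub>E (UNIV :: bool set)"
  using assms by (auto simp: dw_states_def)

lemma ex_flip: "(f (0::nat) :: bool) \<noteq> f n \<Longrightarrow> \<exists>j\<in>{1..n}. f (j - 1) \<noteq> f j"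
proof (induction n)
  case 0
  then show ?case by simp
next
  case (Suc n)
  then show ?case
  proof (cases "f n = f (Suc n)")
    case True
    then have "\<exists>j\<in>{1..n}. f (j - 1) \<noteq> f j" using Suc by simp
    then show ?thesis by auto
  next
    case False
    then show ?thesis by (intro bexI[of _ "Suc n"]) auto
  qed
qed

lemma tele: "(\<Sum>j\<in>{1..n::nat}. (g (j - 1) - g j :: int)) = g 0 - g n"
  by (induction n) (auto simp: atLeastAtMostSuc_conv)

lemma rowset_ne:
  assumes "(H, V) \<in> dw_states n" "i \<in> {1..n}"
  shows "rowset H n i \<noteq> {}"
proof -
  have "H (i, 0) \<noteq> H (i, n)" using dwD[OF assms(1)] assms(2) by auto
  then obtain j where "j \<in> {1..n}" "H (i, j - 1) \<noteq> H (i, j)" using ex_flip[of "\<lambda>j. H (i, j)" n] by blast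
  then show ?thesis by (auto simp: rowset_def cv_def)
qed

lemma colset_ne:
  assumes "(H, V) \<in> dw_states n" "j \<in> {1..n}"
  shows "colset H n j \<noteq> {}"
proof -
  have "V (0, j) \<noteq> V (n, j)" using dwD[OF assms(1)] assms(2) by auto
  then obtain i where i: "i \<in> {1..n}" "V (i - 1, j) \<noteq> V (i, j)" using ex_flip[of "\<lambda>i. V (i, j)" n] by blast
  then have "cv H i j" using cv_V[OF dwD(5)[OF assms(1) i(1) assms(2)]] by simp
  then show ?thesis using i by (auto simp: colset_def)
qed

lemma cntV:
  assumes "(H, V) \<in> dw_states n" "i \<le> n"
  shows "(\<Sum>j\<in>{1..n}. of_bool (V (i, j)) :: int) = int n - int i"
  using assms(2)
proof (induction i)
  case 0
  have "(\<Sum>j\<in>{1..n}. of_bool (V (0, j)) :: int) = (\<Sum>j\<in>{1..n}. 1)"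
    using dwD(3)[OF assms(1)] by (intro sum.cong) auto
  then show ?case by simp
next
  case (Suc i)
  have "(\<Sum>j\<in>{1..n}. of_bool (V (i, j)) :: int) - (\<Sum>j\<in>{1..n}. of_bool (V (Suc i, j)))
      = (\<Sum>j\<in>{1..n}. of_bool (V (Suc i - 1, j)) - of_bool (V (Suc i, j)))"
    by (simp add: sum_subtractf)
  also have "\<dots> = (\<Sum>j\<in>{1..n}. of_bool (H (Suc i, j - 1)) - of_bool (H (Suc i, j)))"
  proof (intro sum.cong refl)
    fix j assume "j \<in> {1..n}"
    then show "of_bool (V (Suc i - 1, j)) - of_bool (V (Suc i, j)) = (of_bool (H (Suc i, j - 1)) - of_bool (H (Suc i, j)) :: int)"
      by (rule ice_int[OF dwD(5)[OF assms(1)], symmetric, rotated]) (use Suc.prems in auto)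
  qed
  also have "\<dots> = 1" using tele[of "\<lambda>j. of_bool (H (Suc i, j))" n] dwD(1,2)[OF assms(1), of "Suc i"] Suc.prems
    by simp
  finally show ?case using Suc by simp
qed

lemma cntH:
  assumes "(H, V) \<in> dw_states n" "j \<le> n"
  shows "(\<Sum>i\<in>{1..n}. of_bool (H (i, j)) :: int) = int n - int j"
  using assms(2)
proof (induction j)
  case 0
  have "(\<Sum>i\<in>{1..n}. of_bool (H (i, 0)) :: int) = (\<Sum>i\<in>{1..n}. 1)"
    using dwD(1)[OF assms(1)] by (intro sum.cong) auto
  then show ?case by simp
next
  case (Suc j)
  have "(\<Sum>i\<in>{1..n}. of_bool (H (i, j)) :: int) - (\<Sum>i\<in>{1..n}. of_bool (H (i, Suc j)))
      = (\<Sum>i\<in>{1..n}. of_bool (H (i, Suc j - 1)) - of_bool (H (i, Suc j)))"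
    by (simp add: sum_subtractf)
  also have "\<dots> = (\<Sum>i\<in>{1..n}. of_bool (V (i - 1, Suc j)) - of_bool (V (i, Suc j)))"
  proof (intro sum.cong refl)
    fix i assume "i \<in> {1..n}"
    then show "of_bool (H (i, Suc j - 1)) - of_bool (H (i, Suc j)) = (of_bool (V (i - 1, Suc j)) - of_bool (V (i, Suc j)) :: int)"
      by (rule ice_int[OF dwD(5)[OF assms(1)]]) (use Suc.prems in auto)
  qed
  also have "\<dots> = 1" using tele[of "\<lambda>i. of_bool (V (i, Suc j))" n] dwD(3,4)[OF assms(1), of "Suc j"] Suc.prems
    by simp
  finally show ?case using Suc by simp
qed

lemma rowset_n:
  assumes "(H, V) \<in> dw_states n" "n \<ge> 1"
  shows "card (rowset H n n) = 1"
proof -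
  have "rowset H n n = {1..n} \<inter> {j. V (n - 1, j)}"
    using cv_V[OF dwD(5)[OF assms(1)]] dwD(4)[OF assms(1)] assms(2)
    by (auto simp: rowset_def)
  moreover have "(\<Sum>j\<in>{1..n}. of_bool (V (n - 1, j)) :: int) = 1"
    using cntV[OF assms(1), of "n - 1"] assms(2) by simp
  ultimately show ?thesis by simp
qed

lemma colset_n:
  assumes "(H, V) \<in> dw_states n" "n \<ge> 1"
  shows "card (colset H n n) = 1"
proof -
  have "colset H n n = {1..n} \<inter> {i. H (i, n - 1)}"
    using dwD(2)[OF assms(1)] by (auto simp: colset_def cv_def)
  moreover have "(\<Sum>i\<in>{1..n}. of_bool (H (i, n - 1)) :: int) = 1"
    using cntH[OF assms(1), of "n - 1"] assms(2) by simp
  ultimately show ?thesis by simp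
qed

definition dd :: "nat \<Rightarrow> (nat \<times> nat \<Rightarrow> bool) \<Rightarrow> nat \<Rightarrow> nat \<Rightarrow> int" where
  "dd n H i j = (if cv H i j then 0 else of_bool (i < n) + of_bool (j < n))"

lemma rowsum:
  "(\<Sum>j\<in>{1..n}. of_bool (\<not> cv H i j \<and> i < n) :: int) = of_bool (i < n) * (int n - int (card (rowset H n i)))"
proof -
  have "(\<Sum>j\<in>{1..n}. of_bool (\<not> cv H i j \<and> i < n) :: int) = (\<Sum>j\<in>{1..n}. of_bool (i < n) * (1 - of_bool (cv H i j)))"
    by (intro sum.cong) auto
  also have "\<dots> = of_bool (i < n) * (int n - (\<Sum>j\<in>{1..n}. of_bool (cv H i j)))"
    by (simp add: sum_distrib_left[symmetric] sum_subtractf)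
  also have "(\<Sum>j\<in>{1..n}. of_bool (cv H i j) :: int) = int (card (rowset H n i))"
  proof -
    have "{1..n} \<inter> {j. cv H i j} = rowset H n i" by (auto simp: rowset_def)
    then show ?thesis by simp
  qed
  finally show ?thesis .
qed

lemma colsum:
  "(\<Sum>i\<in>{1..n}. of_bool (\<not> cv H i j \<and> j < n) :: int) = of_bool (j < n) * (int n - int (card (colset H n j)))"
proof -
  have "(\<Sum>i\<in>{1..n}. of_bool (\<not> cv H i j \<and> j < n) :: int) = (\<Sum>i\<in>{1..n}. of_bool (j < n) * (1 - of_bool (cv H i j)))"
    by (intro sum.cong) auto
  also have "\<dots> = of_bool (j < n) * (int n - (\<Sum>i\<in>{1..n}. of_bool (cv H i j)))"
    by (simp add: sum_distrib_left[symmetric] sum_subtractf)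
  also have "(\<Sum>i\<in>{1..n}. of_bool (cv H i j) :: int) = int (card (colset H n j))"
  proof -
    have "{1..n} \<inter> {i. cv H i j} = colset H n j" by (auto simp: colset_def)
    then show ?thesis by simp
  qed
  finally show ?thesis .
qed

lemma dsum:
  assumes "(H, V) \<in> dw_states n" "n \<ge> 1"
  shows "(\<Sum>i\<in>{1..n}. \<Sum>j\<in>{1..n}. dd n H i j) \<le> Dn n"
    and "(\<Sum>i\<in>{1..n}. \<Sum>j\<in>{1..n}. dd n H i j) = Dn n \<Longrightarrow>
           (\<forall>i\<in>{1..n}. i < n \<longrightarrow> card (rowset H n i) = 1) \<and> (\<forall>j\<in>{1..n}. j < n \<longrightarrow> card (colset H n j) = 1)"
    and "(\<forall>i\<in>{1..n}. i < n \<longrightarrow> card (rowset H n i) = 1) \<and> (\<forall>j\<in>{1..n}. j < n \<longrightarrow> card (colset H n j) = 1)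
     \<Longrightarrow> (\<Sum>i\<in>{1..n}. \<Sum>j\<in>{1..n}. dd n H i j) = Dn n"
proof -
  define f where "f i = of_bool (i < n) * (int n - int (card (rowset H n i)))" for i
  define g where "g j = of_bool (j < n) * (int n - int (card (colset H n j)))" for j
  define F where "F i = of_bool (i < n) * (int n - 1)" for i :: nat
  have eq: "(\<Sum>i\<in>{1..n}. \<Sum>j\<in>{1..n}. dd n H i j) = (\<Sum>i\<in>{1..n}. f i) + (\<Sum>j\<in>{1..n}. g j)"
  proof -
    have "(\<Sum>i\<in>{1..n}. \<Sum>j\<in>{1..n}. dd n H i j)
        = (\<Sum>i\<in>{1..n}. \<Sum>j\<in>{1..n}. of_bool (\<not> cv H i j \<and> i < n)) + (\<Sum>i\<in>{1..n}. \<Sum>j\<in>{1..n}. of_bool (\<not> cv H i j \<and> j < n))"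
    proof -
      have "dd n H i j = of_bool (\<not> cv H i j \<and> i < n) + of_bool (\<not> cv H i j \<and> j < n)" for i j
        by (simp add: dd_def)
      then show ?thesis by (simp add: sum.distrib)
    qed
    also have "(\<Sum>i\<in>{1..n}. \<Sum>j\<in>{1..n}. of_bool (\<not> cv H i j \<and> j < n)) = (\<Sum>j\<in>{1..n}. \<Sum>i\<in>{1..n}. of_bool (\<not> cv H i j \<and> j < n) :: int)"
      by (rule sum.swap)
    finally show ?thesis by (simp only: rowsum colsum f_def g_def)
  qed
  have cr: "card (rowset H n i) \<ge> 1" if "i \<in> {1..n}" for i
    using rowset_ne[OF assms(1) that] by (simp add: rowset_def Suc_le_eq card_gt_0_iff)
  have cc: "card (colset H n j) \<ge> 1" if "j \<in> {1..n}" for j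
    using colset_ne[OF assms(1) that] by (simp add: colset_def Suc_le_eq card_gt_0_iff)
  have fF: "f i \<le> F i" if "i \<in> {1..n}" for i using cr[OF that] by (simp add: f_def F_def)
  have gF: "g j \<le> F j" if "j \<in> {1..n}" for j using cc[OF that] by (simp add: g_def F_def)
  have sumF: "(\<Sum>i\<in>{1..n}. F i) + (\<Sum>i\<in>{1..n}. F i) = Dn n"
  proof -
    have "(\<Sum>i\<in>{1..n}. F i) = (\<Sum>i\<in>{1..n}. of_bool (i < n) * (int n - 1))" by (simp add: F_def)
    also have "\<dots> = (int n - 1) * (int n - 1)"
    proof -
      have "{1..n} \<inter> {i. i < n} = {1..n-1}" using assms(2) by auto
      then have "(\<Sum>i\<in>{1..n}. of_bool (i < n) :: int) = int n - 1" using assms(2) by simp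
      then show ?thesis by (simp add: sum_distrib_right[symmetric])
    qed
    finally show ?thesis by (simp add: Dn_def algebra_simps)
  qed
  have s1: "(\<Sum>i\<in>{1..n}. f i) \<le> (\<Sum>i\<in>{1..n}. F i)" using fF by (intro sum_mono) auto
  have s2: "(\<Sum>j\<in>{1..n}. g j) \<le> (\<Sum>i\<in>{1..n}. F i)" using gF by (intro sum_mono) auto
  show "(\<Sum>i\<in>{1..n}. \<Sum>j\<in>{1..n}. dd n H i j) \<le> Dn n" using eq s1 s2 sumF by linarith
  show "(\<forall>i\<in>{1..n}. i < n \<longrightarrow> card (rowset H n i) = 1) \<and> (\<forall>j\<in>{1..n}. j < n \<longrightarrow> card (colset H n j) = 1)
     \<Longrightarrow> (\<Sum>i\<in>{1..n}. \<Sum>j\<in>{1..n}. dd n H i j) = Dn n"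
  proof -
    assume A: "(\<forall>i\<in>{1..n}. i < n \<longrightarrow> card (rowset H n i) = 1) \<and> (\<forall>j\<in>{1..n}. j < n \<longrightarrow> card (colset H n j) = 1)"
    have "(\<Sum>i\<in>{1..n}. f i) = (\<Sum>i\<in>{1..n}. F i)"
    proof (intro sum.cong refl)
      fix i assume "i \<in> {1..n}" then show "f i = F i" using A by (cases "i < n") (simp_all add: f_def F_def)
    qed
    moreover have "(\<Sum>j\<in>{1..n}. g j) = (\<Sum>i\<in>{1..n}. F i)"
    proof (intro sum.cong refl)
      fix j assume "j \<in> {1..n}" then show "g j = F j" using A by (cases "j < n") (simp_all add: g_def F_def)
    qed
    ultimately show ?thesis using eq sumF by simp
  qed
  assume E: "(\<Sum>i\<in>{1..n}. \<Sum>j\<in>{1..n}. dd n H i j) = Dn n"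
  have e1: "(\<Sum>i\<in>{1..n}. f i) = (\<Sum>i\<in>{1..n}. F i)" and e2: "(\<Sum>j\<in>{1..n}. g j) = (\<Sum>i\<in>{1..n}. F i)"
    using eq s1 s2 sumF E by linarith+
  show "(\<forall>i\<in>{1..n}. i < n \<longrightarrow> card (rowset H n i) = 1) \<and> (\<forall>j\<in>{1..n}. j < n \<longrightarrow> card (colset H n j) = 1)"
  proof (intro conjI ballI impI)
    fix i assume i: "i \<in> {1..n}" "i < n"
    have "f i = F i" using sum_mono_inv[OF e1 fF i(1)] by simp
    then show "card (rowset H n i) = 1" using i by (simp add: f_def F_def)
  next
    fix j assume j: "j \<in> {1..n}" "j < n"
    have "g j = F j" using sum_mono_inv[OF e2 gF j(1)] by simp
    then show "card (colset H n j) = 1" using j by (simp add: g_def F_def)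
  qed
qed


lemma bij_pil:
  assumes "distinct xs"
  shows "bij_betw (pil xs) {1..length xs} (set xs)"
proof -
  let ?m = "length xs"
  have b1: "bij_betw (\<lambda>i. ?m - i) {1..?m} {..<?m}"
    by (rule bij_betw_byWitness[where f'="\<lambda>k. ?m - k"]) auto
  have "bij_betw ((!) xs \<circ> (\<lambda>i. ?m - i)) {1..?m} (set xs)"
    by (rule bij_betw_trans[OF b1 bij_betw_nth[OF assms refl refl]])
  moreover have "pil xs = (!) xs \<circ> (\<lambda>i. ?m - i)" by (auto simp: pil_def fun_eq_iff)
  ultimately show ?thesis by simp
qed

lemma permD:
  assumes "xs \<in> permutations_of_set {1..n}"
  shows "distinct xs" "set xs = {1..n}" "length xs = n"
  using assms by (auto simp: permutations_of_set_def distinct_card[symmetric])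

lemma pil_range:
  assumes "xs \<in> permutations_of_set {1..n}" "i \<in> {1..n}"
  shows "pil xs i \<in> {1..n}"
  using assms permD[OF assms(1)] pil_in[of i xs] by auto

lemma drop_step:
  assumes "distinct xs" "length xs = n" "i \<in> {1..n}"
  shows "set (drop (n - i) xs) = insert (pil xs i) (set (drop (n - (i - 1)) xs))"
    and "pil xs i \<notin> set (drop (n - (i - 1)) xs)"
proof -
  have lt: "n - i < length xs" using assms by auto
  have e: "drop (n - i) xs = xs ! (n - i) # drop (Suc (n - i)) xs"
    by (rule Cons_nth_drop_Suc[OF lt, symmetric])
  have s: "Suc (n - i) = n - (i - 1)" using assms(3) by auto
  have "distinct (drop (n - i) xs)" using assms(1) by simp
  then show "pil xs i \<notin> set (drop (n - (i - 1)) xs)"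
    unfolding e s by (simp add: pil_def assms(2))
  show "set (drop (n - i) xs) = insert (pil xs i) (set (drop (n - (i - 1)) xs))"
    unfolding e s by (simp add: pil_def assms(2))
qed

definition stH :: "nat \<Rightarrow> nat list \<Rightarrow> nat \<times> nat \<Rightarrow> bool" where
  "stH n xs = restrict (\<lambda>(i, j). j < pil xs i) (hedges n)"

definition stV :: "nat \<Rightarrow> nat list \<Rightarrow> nat \<times> nat \<Rightarrow> bool" where
  "stV n xs = restrict (\<lambda>(i, j). j \<notin> set (drop (n - i) xs)) (vedges n)"

lemma cv_st:
  assumes "xs \<in> permutations_of_set {1..n}" "i \<in> {1..n}" "j \<in> {1..n}"
  shows "cv (stH n xs) i j \<longleftrightarrow> j = pil xs i"
proof -
  have p: "pil xs i \<ge> 1" using pil_range[OF assms(1,2)] by auto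
  have "(i, j - 1) \<in> hedges n" "(i, j) \<in> hedges n" using assms(2,3) by (auto simp: hedges_def)
  then show ?thesis using p assms(3) by (auto simp: cv_def stH_def)
qed

lemma st_dw:
  assumes "xs \<in> permutations_of_set {1..n}"
  shows "(stH n xs, stV n xs) \<in> dw_states n"
proof -
  note P = permD[OF assms]
  have ic: "in_count (stH n xs) (stV n xs) i j = 2" if ij: "i \<in> {1..n}" "j \<in> {1..n}" for i j
  proof -
    define p where "p = pil xs i"
    define D where "D = set (drop (n - (i - 1)) xs)"
    have DS: "set (drop (n - i) xs) = insert p D" "p \<notin> D"
      using drop_step[OF P(1) P(3) ij(1)] by (simp_all add: p_def D_def)
    have p1: "p \<ge> 1" using pil_range[OF assms ij(1)] by (simp add: p_def)
    have e: "(i, j - 1) \<in> hedges n" "(i, j) \<in> hedges n" "(i - 1, j) \<in> vedges n" "(i, j) \<in> vedges n"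
      using ij by (auto simp: hedges_def vedges_def)
    have v: "stH n xs (i, j - 1) = (j - 1 < p)" "stH n xs (i, j) = (j < p)"
      "stV n xs (i - 1, j) = (j \<notin> D)" "stV n xs (i, j) = (j \<notin> insert p D)"
      using e DS(1) by (simp_all add: stH_def stV_def p_def D_def)
    show ?thesis
      unfolding in_count_def v using DS(2) p1 ij(2)
      by (cases "j < p"; cases "j = p") auto
  qed
  show ?thesis
    unfolding dw_states_def
  proof (intro CollectI, unfold case_prod_conv, intro conjI)
    show "stH n xs \<in> hedges n \<rightarrow>\<^sub>E UNIV" "stV n xs \<in> vedges n \<rightarrow>\<^sub>E UNIV"
      by (simp_all add: stH_def stV_def)
    show "\<forall>i\<in>{1..n}. stH n xs (i, 0) \<and> \<not> stH n xs (i, n)"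
      using pil_range[OF assms] by (force simp: stH_def hedges_def)
    show "\<forall>j\<in>{1..n}. stV n xs (0, j) \<and> \<not> stV n xs (n, j)"
      using P by (auto simp: stV_def vedges_def)
    show "\<forall>i\<in>{1..n}. \<forall>j\<in>{1..n}. in_count (stH n xs) (stV n xs) i j = 2"
      using ic by blast
  qed
qed

definition goodS :: "nat \<Rightarrow> (nat \<times> nat \<Rightarrow> bool) \<times> (nat \<times> nat \<Rightarrow> bool) \<Rightarrow> bool" where
  "goodS n s \<longleftrightarrow> s \<in> dw_states n \<and> (\<forall>i\<in>{1..n}. card (rowset (fst s) n i) = 1)
      \<and> (\<forall>j\<in>{1..n}. card (colset (fst s) n j) = 1)"

lemma st_good:
  assumes "xs \<in> permutations_of_set {1..n}"
  shows "goodS n (stH n xs, stV n xs)"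
proof -
  note P = permD[OF assms]
  have b: "bij_betw (pil xs) {1..n} {1..n}" using bij_pil[OF P(1)] P by simp
  have r: "rowset (stH n xs) n i = {pil xs i}" if "i \<in> {1..n}" for i
    using cv_st[OF assms that] pil_range[OF assms that] by (auto simp: rowset_def)
  have c: "\<exists>i0. colset (stH n xs) n j = {i0}" if j: "j \<in> {1..n}" for j
  proof -
    have "j \<in> pil xs ` {1..n}" using b j by (simp add: bij_betw_def)
    then obtain i0 where i0: "i0 \<in> {1..n}" "pil xs i0 = j" by blast
    have "colset (stH n xs) n j = {i\<in>{1..n}. pil xs i = j}"
      using cv_st[OF assms _ j] by (auto simp: colset_def)
    also have "\<dots> = {i0}"
    proof (intro equalityI subsetI)
      fix i assume "i \<in> {i\<in>{1..n}. pil xs i = j}"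
      then have "i \<in> {1..n}" "pil xs i = pil xs i0" using i0 by auto
      then have "i = i0" using b i0(1) unfolding bij_betw_def inj_on_def by blast
      then show "i \<in> {i0}" by simp
    next
      fix i assume "i \<in> {i0}"
      then show "i \<in> {i\<in>{1..n}. pil xs i = j}" using i0 by simp
    qed
    finally show ?thesis by blast
  qed
  show ?thesis unfolding goodS_def
  proof (intro conjI ballI)
    show "(stH n xs, stV n xs) \<in> dw_states n" by (rule st_dw[OF assms])
  next
    fix i assume "i \<in> {1..n}"
    then show "card (rowset (fst (stH n xs, stV n xs)) n i) = 1" using r by simp
  next
    fix j assume "j \<in> {1..n}"
    then obtain i0 where "colset (stH n xs) n j = {i0}" using c by blast
    then show "card (colset (fst (stH n xs, stV n xs)) n j) = 1" by simp
  qed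
qed

definition lst :: "nat \<Rightarrow> (nat \<times> nat \<Rightarrow> bool) \<Rightarrow> nat list" where
  "lst n H = map (\<lambda>k. THE j. j \<in> {1..n} \<and> cv H (n - k) j) [0..<n]"

lemma lst_st:
  assumes "xs \<in> permutations_of_set {1..n}"
  shows "lst n (stH n xs) = xs"
proof -
  note P = permD[OF assms]
  have "(THE j. j \<in> {1..n} \<and> cv (stH n xs) (n - k) j) = xs ! k" if k: "k < n" for k
  proof -
    have nk: "n - k \<in> {1..n}" using k by auto
    have "(THE j. j \<in> {1..n} \<and> cv (stH n xs) (n - k) j) = pil xs (n - k)"
      using cv_st[OF assms nk] pil_range[OF assms nk] by (intro the_equality) auto
    also have "\<dots> = xs ! k" using k P by (simp add: pil_def)
    finally show ?thesis .
  qed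
  then show ?thesis using P by (intro nth_equalityI) (auto simp: lst_def)
qed

lemma good_struct:
  assumes "goodS n (H, V)"
  shows "lst n H \<in> permutations_of_set {1..n}" "stH n (lst n H) = H" "stV n (lst n H) = V"
proof -
  have dw: "(H, V) \<in> dw_states n" using assms by (simp add: goodS_def)
  define pi where "pi i = (THE j. j \<in> {1..n} \<and> cv H i j)" for i
  have pi: "pi i \<in> {1..n} \<and> cv H i (pi i) \<and> (\<forall>j\<in>{1..n}. cv H i j \<longrightarrow> j = pi i)" if i: "i \<in> {1..n}" for i
  proof -
    have "card (rowset H n i) = 1" using assms i by (simp add: goodS_def)
    then obtain x where x: "rowset H n i = {x}" by (rule card_1_singletonE)
    have "x \<in> rowset H n i" using x by simp
    then have x1: "x \<in> {1..n}" "cv H i x" by (simp_all add: rowset_def)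
    have x2: "j = x" if "j \<in> {1..n}" "cv H i j" for j
    proof -
      have "j \<in> rowset H n i" using that by (simp add: rowset_def)
      then show ?thesis using x by simp
    qed
    have "pi i = x" unfolding pi_def
      by (rule the_equality) (use x1 x2 in blast)+
    then show ?thesis using x1 x2 by blast
  qed
  have inj: "inj_on pi {1..n}"
  proof (rule inj_onI)
    fix i i' assume ii: "i \<in> {1..n}" "i' \<in> {1..n}" "pi i = pi i'"
    have "card (colset H n (pi i)) = 1" using assms pi[OF ii(1)] by (simp add: goodS_def)
    then obtain y where y: "colset H n (pi i) = {y}" by (rule card_1_singletonE)
    have "i \<in> colset H n (pi i)" using pi[OF ii(1)] ii(1) by (simp add: colset_def)
    moreover have "i' \<in> colset H n (pi i)" using pi[OF ii(2)] ii(2,3) by (simp add: colset_def)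
    ultimately show "i = i'" using y by simp
  qed
  have surj: "pi ` {1..n} = {1..n}"
  proof (rule endo_inj_surj[OF _ _ inj])
    show "pi ` {1..n} \<subseteq> {1..n}" using pi by blast
  qed simp
  have lst_eq: "lst n H = map (\<lambda>k. pi (n - k)) [0..<n]" by (simp add: lst_def pi_def)
  have img: "(\<lambda>k. n - k) ` {0..<n} = {1..n}"
  proof
    show "(\<lambda>k. n - k) ` {0..<n} \<subseteq> {1..n}" by auto
    show "{1..n} \<subseteq> (\<lambda>k. n - k) ` {0..<n}"
    proof
      fix i assume "i \<in> {1..n}"
      then have "i = n - (n - i)" "n - i \<in> {0..<n}" by auto
      then show "i \<in> (\<lambda>k. n - k) ` {0..<n}" by blast
    qed
  qed
  have inj2: "inj_on (\<lambda>k. pi (n - k)) {0..<n}"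
  proof (rule inj_onI)
    fix k k' assume kk: "k \<in> {0..<n}" "k' \<in> {0..<n}" "pi (n - k) = pi (n - k')"
    have "n - k \<in> {1..n}" "n - k' \<in> {1..n}" using kk(1,2) by auto
    then have "n - k = n - k'" using inj_onD[OF inj kk(3)] by blast
    then show "k = k'" using kk by auto
  qed
  show L: "lst n H \<in> permutations_of_set {1..n}"
  proof -
    have "distinct (lst n H)" unfolding lst_eq using inj2 by (simp add: distinct_map)
    moreover have "set (lst n H) = {1..n}"
    proof -
      have "set (lst n H) = (\<lambda>k. pi (n - k)) ` {0..<n}" by (simp add: lst_eq)
      also have "\<dots> = pi ` ((\<lambda>k. n - k) ` {0..<n})" by (simp only: image_image)
      also have "\<dots> = {1..n}" using img surj by simp
      finally show ?thesis .
    qed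
    ultimately show ?thesis by (simp add: permutations_of_set_def)
  qed
  note P = permD[OF L]
  have pil_eq: "pil (lst n H) i = pi i" if "i \<in> {1..n}" for i
    using that P(3) by (simp add: pil_def lst_eq)
  have Hf: "H (i, j) = (j < pi i)" if i: "i \<in> {1..n}" and j: "j \<le> n" for i j
    using j
  proof (induction j)
    case 0
    then show ?case using dwD(1)[OF dw i] pi[OF i] by auto
  next
    case (Suc j)
    have sj: "Suc j \<in> {1..n}" using Suc.prems by auto
    have "cv H i (Suc j) \<longleftrightarrow> Suc j = pi i" using pi[OF i] sj by metis
    then have c: "(H (i, j) \<noteq> H (i, Suc j)) = (Suc j = pi i)" by (simp add: cv_def)
    have ih: "H (i, j) = (j < pi i)" using Suc.IH Suc.prems by simp
    show ?case using c ih by (cases "Suc j = pi i") auto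
  qed
  show "stH n (lst n H) = H"
  proof
    fix e :: "nat \<times> nat"
    obtain i j where e: "e = (i, j)" by fastforce
    show "stH n (lst n H) e = H e"
    proof (cases "e \<in> hedges n")
      case True
      then have "i \<in> {1..n}" "j \<le> n" using e by (auto simp: hedges_def)
      then show ?thesis using True e Hf pil_eq by (simp add: stH_def)
    next
      case False
      then show ?thesis using PiE_arb[OF dwD(6)[OF dw] False] by (simp add: stH_def)
    qed
  qed
  have Vf: "V (i, j) = (j \<notin> set (drop (n - i) (lst n H)))" if j: "j \<in> {1..n}" and i: "i \<le> n" for i j
    using i
  proof (induction i)
    case 0
    then show ?case using dwD(3)[OF dw j] P(3) by simp
  next
    case (Suc i)
    have si: "Suc i \<in> {1..n}" using Suc.prems by auto
    note DS = drop_step[OF P(1) P(3) si]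
    have "cv H (Suc i) j \<longleftrightarrow> j = pi (Suc i)" using pi[OF si] j by metis
    moreover have "cv H (Suc i) j \<longleftrightarrow> V (i, j) \<noteq> V (Suc i, j)"
      using cv_V[OF dwD(5)[OF dw si j]] by simp
    ultimately have c: "(V (i, j) \<noteq> V (Suc i, j)) = (j = pi (Suc i))" by simp
    have D1: "set (drop (n - Suc i) (lst n H)) = insert (pi (Suc i)) (set (drop (n - i) (lst n H)))"
      using DS(1) pil_eq[OF si] by simp
    have D2: "pi (Suc i) \<notin> set (drop (n - i) (lst n H))" using DS(2) pil_eq[OF si] by simp
    have ih: "V (i, j) = (j \<notin> set (drop (n - i) (lst n H)))" using Suc.IH Suc.prems by simp
    show ?case unfolding D1 using c D2 ih by (cases "j = pi (Suc i)") auto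
  qed
  show "stV n (lst n H) = V"
  proof
    fix e :: "nat \<times> nat"
    obtain i j where e: "e = (i, j)" by fastforce
    show "stV n (lst n H) e = V e"
    proof (cases "e \<in> vedges n")
      case True
      then have "j \<in> {1..n}" "i \<le> n" using e by (auto simp: vedges_def)
      then show ?thesis using True e Vf by (simp add: stV_def)
    next
      case False
      then show ?thesis using PiE_arb[OF dwD(7)[OF dw] False] by (simp add: stV_def)
    qed
  qed
qed


lemma lconst_mult: "lconst (c * d) = lconst c * lconst d"
  by (simp add: lconst_def mult_single)

lemma lconst_add: "lconst (c + d) = lconst c + lconst d"
  by (simp add: lconst_def single_add)

lemma lconst_diff: "lconst (c - d) = lconst c - lconst d"
  by (simp add: lconst_def single_diff)

lemma lconst_one: "lconst 1 = 1"
  by (simp add: lconst_def)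

lemma lconst_zero: "lconst 0 = 0"
  by (simp add: lconst_def)

lemma lconst_sum: "lconst (\<Sum>x\<in>A. f x) = (\<Sum>x\<in>A. lconst (f x))"
  by (induction A rule: infinite_finite_induct) (simp_all add: lconst_zero lconst_add)

lemma lconst_prod: "lconst (\<Prod>x\<in>A. f x) = (\<Prod>x\<in>A. lconst (f x))"
  by (induction A rule: infinite_finite_induct) (simp_all add: lconst_one lconst_mult)

lemma xpow_add: "xpow i e * xpow i f = xpow i (e + f)"
  unfolding xpow_def mult_single single_add[symmetric] by simp

lemma ypow_add: "ypow i e * ypow i f = ypow i (e + f)"
  unfolding ypow_def mult_single single_add[symmetric] by simp

lemma xpow_zero: "xpow i 0 = 1"
  by (simp add: xpow_def)

lemma ypow_zero: "ypow i 0 = 1"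
  by (simp add: ypow_def)

lemma xpow_pow: "xpow i e ^ k = xpow i (int k * e)"
  by (induction k) (simp_all add: xpow_zero xpow_add algebra_simps)

lemma ypow_pow: "ypow i e ^ k = ypow i (int k * e)"
  by (induction k) (simp_all add: ypow_zero ypow_add algebra_simps)

lemma mono3: "lconst c * xpow i e * ypow j f
   = Poly_Mapping.single (Poly_Mapping.single (X i) e + Poly_Mapping.single (Y j) f) c"
  by (simp add: lconst_def xpow_def ypow_def mult_single)

lemma Lf_XY:
  assumes "i \<in> {1..n}" "j \<in> {1..n}"
  shows "Lf n (Poly_Mapping.single (X i) e + Poly_Mapping.single (Y j) f) = of_bool (i < n) * e - of_bool (j < n) * f"
proof -
  have "Lf n (Poly_Mapping.single (X i) e + Poly_Mapping.single (Y j) f)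
      = (\<Sum>k\<in>{1..n-1}. (if i = k then e else 0) - (if j = k then f else 0))"
    unfolding Lf_def by (intro sum.cong refl) (simp add: lookup_add lookup_single when_def)
  also have "\<dots> = (if i \<in> {1..n-1} then e else 0) - (if j \<in> {1..n-1} then f else 0)"
    by (simp add: sum_subtractf)
  also have "\<dots> = of_bool (i < n) * e - of_bool (j < n) * f" using assms by auto
  finally show ?thesis .
qed

lemma Lle_diff: "Lle n P d \<Longrightarrow> Lle n Q d \<Longrightarrow> Lle n (P - Q) d"
  unfolding Lle_def using keys_diff_sub[of P Q] by blast

lemma Lle_prod:
  assumes "finite S" "\<And>v. v \<in> S \<Longrightarrow> Lle n (t v) (d v)"
  shows "Lle n (\<Prod>v\<in>S. t v) (\<Sum>v\<in>S. d v)"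
  using prod_expand[of S n t d t] assms by (simp add: Llt_zero)

definition tv :: "complex \<Rightarrow> nat \<Rightarrow> (nat \<times> nat \<Rightarrow> bool) \<Rightarrow> (nat \<times> nat \<Rightarrow> bool) \<Rightarrow> nat \<Rightarrow> nat \<Rightarrow> lpoly" where
  "tv a n H V i j = (if cv H i j then lconst (sigma (a^2))
     else if i = n \<and> j = n then vweight a H V i j
     else lconst (if H (i, j) = V (i, j) then a else - inverse a) * xpow i 1 * ypow j (-1))"

lemma tv_bound:
  assumes ij: "i \<in> {1..n}" "j \<in> {1..n}"
  shows "Lle n (tv a n H V i j) (dd n H i j) \<and> Llt n (vweight a H V i j - tv a n H V i j) (dd n H i j)"
proof (cases "cv H i j")
  case True
  then have "tv a n H V i j = lconst (sigma (a^2))" "vweight a H V i j = lconst (sigma (a^2))" "dd n H i j = 0"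
    by (simp_all add: tv_def vweight_def dd_def cv_def)
  then show ?thesis by (simp add: Llt_zero lconst_def Lle_single)
next
  case False
  note LX = Lf_XY[OF ij]
  have az: "sig_az a i j = Poly_Mapping.single (Poly_Mapping.single (X i) 1 + Poly_Mapping.single (Y j) (-1)) a
          - Poly_Mapping.single (Poly_Mapping.single (X i) (-1) + Poly_Mapping.single (Y j) 1) (inverse a)"
    by (simp add: sig_az_def mono3)
  have azb: "sig_azbar a i j = Poly_Mapping.single (Poly_Mapping.single (X i) (-1) + Poly_Mapping.single (Y j) 1) a
          - Poly_Mapping.single (Poly_Mapping.single (X i) 1 + Poly_Mapping.single (Y j) (-1)) (inverse a)"
    by (simp add: sig_azbar_def mono3)
  show ?thesis
  proof (cases "i = n \<and> j = n")
    case True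
    then have e: "tv a n H V i j = vweight a H V i j" "dd n H i j = 0" using False by (simp_all add: tv_def dd_def)
    have "Lle n (sig_az a i j) 0" "Lle n (sig_azbar a i j) 0"
      unfolding az azb using True LX by (auto intro!: Lle_diff Lle_single)
    then have "Lle n (vweight a H V i j) 0" using False by (simp add: vweight_def cv_def)
    then show ?thesis using e by (simp add: Llt_zero)
  next
    case nn: False
    have nn': "(i = n \<and> j = n) = False" using nn by simp
    have d: "dd n H i j = of_bool (i < n) + of_bool (j < n)" "dd n H i j \<ge> 1"
      using False nn ij by (auto simp: dd_def)
    show ?thesis
    proof (cases "H (i, j) = V (i, j)")
      case True
      have t: "tv a n H V i j = Poly_Mapping.single (Poly_Mapping.single (X i) 1 + Poly_Mapping.single (Y j) (-1)) a"
        using False True by (simp add: tv_def mono3 nn')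
      have w: "vweight a H V i j = sig_az a i j" using False True by (simp add: vweight_def cv_def)
      have r: "vweight a H V i j - tv a n H V i j = - Poly_Mapping.single (Poly_Mapping.single (X i) (-1) + Poly_Mapping.single (Y j) 1) (inverse a)"
        unfolding w t az by simp
      show ?thesis unfolding r unfolding t single_uminus[symmetric] using LX d
        by (intro conjI Lle_single Llt_single) auto
    next
      case HV: False
      have t: "tv a n H V i j = Poly_Mapping.single (Poly_Mapping.single (X i) 1 + Poly_Mapping.single (Y j) (-1)) (- inverse a)"
        using False HV by (simp add: tv_def mono3 nn')
      have w: "vweight a H V i j = sig_azbar a i j" using False HV by (simp add: vweight_def cv_def)
      have r: "vweight a H V i j - tv a n H V i j = Poly_Mapping.single (Poly_Mapping.single (X i) (-1) + Poly_Mapping.single (Y j) 1) a"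
        unfolding w t azb by (simp add: single_uminus)
      show ?thesis unfolding r unfolding t using LX d
        by (intro conjI Lle_single Llt_single) auto
    qed
  qed
qed

definition Mt :: "nat \<Rightarrow> lpoly" where
  "Mt n = (\<Prod>i\<in>{1..n}. xpow i (int n - 1) * ypow i (int n - 1))"

lemma Mt_Lle: "Lle n (Mt n) 0"
proof -
  have "Lle n (\<Prod>i\<in>{1..n}. xpow i (int n - 1) * ypow i (int n - 1)) (\<Sum>i\<in>{1..n}. 0)"
  proof (rule Lle_prod)
    fix i assume i: "i \<in> {1..n}"
    have "xpow i (int n - 1) * ypow i (int n - 1) = lconst 1 * xpow i (int n - 1) * ypow i (int n - 1)"
      by (simp add: lconst_one)
    also have "\<dots> = Poly_Mapping.single (Poly_Mapping.single (X i) (int n - 1) + Poly_Mapping.single (Y i) (int n - 1)) 1"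
      by (rule mono3)
    finally show "Lle n (xpow i (int n - 1) * ypow i (int n - 1)) 0"
      using Lf_XY[OF i i] by (simp add: Lle_single)
  qed simp
  then show ?thesis by (simp add: Mt_def)
qed

lemma state_select:
  assumes dw: "(H, V) \<in> dw_states n" and n: "n \<ge> 1"
  shows "select_part n (Mt n * (\<Prod>i\<in>{1..n}. \<Prod>j\<in>{1..n}. vweight a H V i j))
       = (if goodS n (H, V) then select_part n (Mt n * (\<Prod>i\<in>{1..n}. \<Prod>j\<in>{1..n}. tv a n H V i j)) else 0)"
proof -
  let ?S = "{1..n} \<times> {1..n}"
  define F where "F = (\<Prod>i\<in>{1..n}. \<Prod>j\<in>{1..n}. vweight a H V i j)"
  define T where "T = (\<Prod>i\<in>{1..n}. \<Prod>j\<in>{1..n}. tv a n H V i j)"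
  define D where "D = (\<Sum>i\<in>{1..n}. \<Sum>j\<in>{1..n}. dd n H i j)"
  have F': "F = (\<Prod>(i, j)\<in>?S. vweight a H V i j)" unfolding F_def by (rule prod.cartesian_product)
  have T': "T = (\<Prod>(i, j)\<in>?S. tv a n H V i j)" unfolding T_def by (rule prod.cartesian_product)
  have D': "D = (\<Sum>(i, j)\<in>?S. dd n H i j)" unfolding D_def by (rule sum.cartesian_product)
  have PE: "Lle n T D \<and> Llt n (F - T) D"
    unfolding F' T' D'
  proof (rule prod_expand)
    fix v assume "v \<in> ?S"
    then obtain i j where v: "v = (i, j)" "i \<in> {1..n}" "j \<in> {1..n}" by blast
    show "Lle n (case v of (i, j) \<Rightarrow> tv a n H V i j) (case v of (i, j) \<Rightarrow> dd n H i j) \<and>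
          Llt n ((case v of (i, j) \<Rightarrow> vweight a H V i j) - (case v of (i, j) \<Rightarrow> tv a n H V i j)) (case v of (i, j) \<Rightarrow> dd n H i j)"
      unfolding v(1) using tv_bound[OF v(2,3)] by simp
  qed simp
  have MT: "Lle n (Mt n * T) D" using Lle_mult[OF Mt_Lle PE[THEN conjunct1]] by simp
  have MR: "Llt n (Mt n * (F - T)) D" using Llt_mult2[OF Mt_Lle PE[THEN conjunct2]] by simp
  have MF: "Mt n * F = Mt n * T + Mt n * (F - T)" by (simp add: algebra_simps)
  have Dle: "D \<le> Dn n" unfolding D_def by (rule dsum(1)[OF dw n])
  show ?thesis
  proof (cases "D = Dn n")
    case True
    have A: "(\<forall>i\<in>{1..n}. i < n \<longrightarrow> card (rowset H n i) = 1) \<and> (\<forall>j\<in>{1..n}. j < n \<longrightarrow> card (colset H n j) = 1)"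
      using dsum(2)[OF dw n] True unfolding D_def by blast
    have R: "card (rowset H n i) = 1" if i: "i \<in> {1..n}" for i
    proof (cases "i < n")
      case True then show ?thesis using A i by blast
    next
      case False then have "i = n" using i by auto
      then show ?thesis using rowset_n[OF dw n] by simp
    qed
    have C: "card (colset H n j) = 1" if j: "j \<in> {1..n}" for j
    proof (cases "j < n")
      case True then show ?thesis using A j by blast
    next
      case False then have "j = n" using j by auto
      then show ?thesis using colset_n[OF dw n] by simp
    qed
    have g: "goodS n (H, V)" unfolding goodS_def using dw R C by simp
    have "select_part n (Mt n * F) = select_part n (Mt n * T)"
    proof -
      have "select_part n (Mt n * (F - T)) = 0" using select_Llt[OF n] MR True by simp
      then show ?thesis unfolding MF select_add by simp
    qed
    then show ?thesis using g by (simp add: F_def T_def)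
  next
    case False
    then have lt: "D < Dn n" using Dle by simp
    have "Lle n (Mt n * F) D" unfolding MF by (rule Lle_add[OF MT Llt_Lle[OF MR]])
    then have "select_part n (Mt n * F) = 0" using select_Llt[OF n] Lle_Llt lt by blast
    moreover have "\<not> goodS n (H, V)"
    proof
      assume "goodS n (H, V)"
      then have "D = Dn n" unfolding D_def using dsum(3)[OF dw n] by (simp add: goodS_def)
      then show False using False by simp
    qed
    ultimately show ?thesis by (simp add: F_def)
  qed
qed


definition Ep :: "nat \<Rightarrow> complex \<Rightarrow> lpoly" where
  "Ep n a = 1 - lconst (inverse a ^ 2) * xpow n (-2) * ypow n 2"

definition Xall :: "nat \<Rightarrow> lpoly" where
  "Xall n = (\<Prod>i\<in>{1..n}. xpow i (2 * (int n - 1)))"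

lemma sig_az_E:
  assumes "a \<noteq> 0"
  shows "sig_az a n n = lconst a * (xpow n 1 * ypow n (-1)) * Ep n a"
proof -
  have "lconst a * (xpow n 1 * ypow n (-1)) * Ep n a
      = lconst a * xpow n 1 * ypow n (-1) - lconst (a * inverse a ^ 2) * (xpow n 1 * xpow n (-2)) * (ypow n (-1) * ypow n 2)"
    by (simp add: Ep_def lconst_mult algebra_simps)
  also have "a * inverse a ^ 2 = inverse a" using assms by (simp add: field_simps power2_eq_square)
  finally show ?thesis by (simp add: sig_az_def xpow_add ypow_add)
qed

lemma tv_st:
  assumes xs: "xs \<in> permutations_of_set {1..n}" and ij: "i \<in> {1..n}" "j \<in> {1..n}" and a: "a \<noteq> 0"
  shows "tv a n (stH n xs) (stV n xs) i j
     = lconst ((if j = pil xs i then sigma (a^2) else 1) * cf a xs i j)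
       * (if j = pil xs i then 1 else xpow i 1 * ypow j (-1))
       * (if i = n \<and> j = n \<and> j \<noteq> pil xs i then Ep n a else 1)"
proof -
  note P = permD[OF xs]
  have Hv: "stH n xs (i, j) = (j < pil xs i)" using ij by (simp add: stH_def hedges_def)
  have Vv: "stV n xs (i, j) = (j \<notin> set (drop (n - i) xs))" using ij by (simp add: stV_def vedges_def)
  have cvv: "cv (stH n xs) i j \<longleftrightarrow> j = pil xs i" by (rule cv_st[OF xs ij])
  have cfv: "cf a xs i j = (if j = pil xs i then 1 else if stH n xs (i, j) = stV n xs (i, j) then a else - inverse a)"
    unfolding Hv Vv cf_def P(3) ..
  show ?thesis
  proof (cases "j = pil xs i")
    case True
    then show ?thesis using cvv by (simp add: tv_def cf_def lconst_one)
  next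
    case False
    show ?thesis
    proof (cases "i = n \<and> j = n")
      case True
      have pr: "pil xs n \<in> {1..n}" using pil_range[OF xs] ij True by simp
      have H0: "stH n xs (n, n) = False" using Hv True pr by simp
      have V0: "stV n xs (n, n) = False" using Vv True P ij by simp
      have "tv a n (stH n xs) (stV n xs) i j = vweight a (stH n xs) (stV n xs) n n"
        using False cvv True by (simp add: tv_def)
      also have "\<dots> = sig_az a n n"
        using False cvv True H0 V0 by (simp add: vweight_def cv_def)
      also have "\<dots> = lconst a * (xpow n 1 * ypow n (-1)) * Ep n a" by (rule sig_az_E[OF a])
      finally show ?thesis using True False cfv H0 V0 by simp
    next
      case nn: False
      have nn': "(i = n \<and> j = n) = False" using nn by simp
      have nn2: "(i = n \<and> j = n \<and> j \<noteq> pil xs i) = False" using nn by blast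
      have "tv a n (stH n xs) (stV n xs) i j = lconst (if stH n xs (i, j) = stV n xs (i, j) then a else - inverse a) * xpow i 1 * ypow j (-1)"
        using False cvv by (simp add: tv_def nn')
      then show ?thesis unfolding nn2 using False cfv by (simp add: mult.assoc)
    qed
  qed
qed

lemma prod_if_one:
  assumes "finite S" "p \<in> S"
  shows "(\<Prod>j\<in>S. if j = p then 1 else c) = c ^ (card S - 1)"
proof -
  have "(\<Prod>j\<in>S. if j = p then 1 else c) = (if p = p then 1 else c) * (\<Prod>j\<in>S - {p}. if j = p then 1 else c)"
    by (rule prod.remove[OF assms])
  also have "(\<Prod>j\<in>S - {p}. if j = p then 1 else c) = (\<Prod>j\<in>S - {p}. c)" by (intro prod.cong) auto
  finally show ?thesis using assms by simp
qed

lemma Mt_tv: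
  assumes xs: "xs \<in> permutations_of_set {1..n}" and n: "n \<ge> 1" and a: "a \<noteq> 0"
  shows "Mt n * (\<Prod>i\<in>{1..n}. \<Prod>j\<in>{1..n}. tv a n (stH n xs) (stV n xs) i j)
       = lconst (sigma (a^2) ^ n * Kl a xs) * Xall n * (if hd xs = n then 1 else Ep n a)"
proof -
  note P = permD[OF xs]
  define p where "p = pil xs"
  define rho where "rho = inv_into {1..n} p"
  have bij: "bij_betw p {1..n} {1..n}" using bij_pil[OF P(1)] P by (simp add: p_def)
  have prange: "p i \<in> {1..n}" if "i \<in> {1..n}" for i using bij that by (auto simp: bij_betw_def)
  have rrange: "rho j \<in> {1..n}" if "j \<in> {1..n}" for j
    using bij that unfolding rho_def bij_betw_def by (metis inv_into_into)
  have iff: "(j = p i) \<longleftrightarrow> (i = rho j)" if "i \<in> {1..n}" "j \<in> {1..n}" for i j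
  proof
    assume "j = p i" then show "i = rho j" using bij that unfolding rho_def bij_betw_def by (simp add: inv_into_f_f)
  next
    assume "i = rho j" then show "j = p i" using bij that unfolding rho_def bij_betw_def by (simp add: f_inv_into_f)
  qed
  define A where "A i j = lconst ((if j = p i then sigma (a^2) else 1) * cf a xs i j)" for i j
  define B1 where "B1 i j = (if j = p i then 1 else xpow i 1)" for i j
  define B2 where "B2 i j = (if j = p i then 1 else ypow j (-1))" for i j
  define C where "C i j = (if i = n then (if j = n then (if n \<noteq> p n then Ep n a else 1) else 1) else 1)" for i j
  have tv_eq: "tv a n (stH n xs) (stV n xs) i j = A i j * B1 i j * B2 i j * C i j" if "i \<in> {1..n}" "j \<in> {1..n}" for i j
    unfolding tv_st[OF xs that a] A_def B1_def B2_def C_def p_def by (cases "j = pil xs i") auto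
  have "(\<Prod>i\<in>{1..n}. \<Prod>j\<in>{1..n}. tv a n (stH n xs) (stV n xs) i j)
      = (\<Prod>i\<in>{1..n}. \<Prod>j\<in>{1..n}. A i j * B1 i j * B2 i j * C i j)"
    using tv_eq by (intro prod.cong refl) auto
  also have "\<dots> = (\<Prod>i\<in>{1..n}. \<Prod>j\<in>{1..n}. A i j) * (\<Prod>i\<in>{1..n}. \<Prod>j\<in>{1..n}. B1 i j)
       * (\<Prod>i\<in>{1..n}. \<Prod>j\<in>{1..n}. B2 i j) * (\<Prod>i\<in>{1..n}. \<Prod>j\<in>{1..n}. C i j)"
    by (simp add: prod.distrib)
  finally have split: "(\<Prod>i\<in>{1..n}. \<Prod>j\<in>{1..n}. tv a n (stH n xs) (stV n xs) i j)
      = (\<Prod>i\<in>{1..n}. \<Prod>j\<in>{1..n}. A i j) * (\<Prod>i\<in>{1..n}. \<Prod>j\<in>{1..n}. B1 i j)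
       * (\<Prod>i\<in>{1..n}. \<Prod>j\<in>{1..n}. B2 i j) * (\<Prod>i\<in>{1..n}. \<Prod>j\<in>{1..n}. C i j)" .
  have PA: "(\<Prod>i\<in>{1..n}. \<Prod>j\<in>{1..n}. A i j) = lconst (sigma (a^2) ^ n * Kl a xs)"
  proof -
    have "(\<Prod>i\<in>{1..n}. \<Prod>j\<in>{1..n}. A i j) = lconst (\<Prod>i\<in>{1..n}. \<Prod>j\<in>{1..n}. (if j = p i then sigma (a^2) else 1) * cf a xs i j)"
      by (simp add: A_def lconst_prod)
    also have "(\<Prod>i\<in>{1..n}. \<Prod>j\<in>{1..n}. (if j = p i then sigma (a^2) else 1) * cf a xs i j)
        = (\<Prod>i\<in>{1..n}. (\<Prod>j\<in>{1..n}. if j = p i then sigma (a^2) else 1)) * (\<Prod>i\<in>{1..n}. \<Prod>j\<in>{1..n}. cf a xs i j)"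
      by (simp add: prod.distrib)
    also have "(\<Prod>i\<in>{1..n}. (\<Prod>j\<in>{1..n}. if j = p i then sigma (a^2) else 1)) = (\<Prod>i\<in>{1..n}. sigma (a^2))"
    proof (intro prod.cong refl)
      fix i assume i: "i \<in> {1..n}"
      show "(\<Prod>j\<in>{1..n}. if j = p i then sigma (a^2) else 1) = sigma (a^2)"
        using prange[OF i] by (simp add: prod.delta)
    qed
    also have "(\<Prod>i\<in>{1..n}. \<Prod>j\<in>{1..n}. cf a xs i j) = Kl a xs"
      by (simp add: Kl_def P)
    finally show ?thesis by simp
  qed
  have PB1: "(\<Prod>i\<in>{1..n}. \<Prod>j\<in>{1..n}. B1 i j) = (\<Prod>i\<in>{1..n}. xpow i (int n - 1))"
  proof (intro prod.cong refl)
    fix i assume i: "i \<in> {1..n}"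
    have "(\<Prod>j\<in>{1..n}. B1 i j) = xpow i 1 ^ (n - 1)"
      unfolding B1_def using prod_if_one[of "{1..n}" "p i" "xpow i 1"] prange[OF i] by simp
    also have "\<dots> = xpow i (int n - 1)" using n by (simp add: xpow_pow of_nat_diff)
    finally show "(\<Prod>j\<in>{1..n}. B1 i j) = xpow i (int n - 1)" .
  qed
  have PB2: "(\<Prod>i\<in>{1..n}. \<Prod>j\<in>{1..n}. B2 i j) = (\<Prod>j\<in>{1..n}. ypow j (- (int n - 1)))"
  proof -
    have "(\<Prod>i\<in>{1..n}. \<Prod>j\<in>{1..n}. B2 i j) = (\<Prod>j\<in>{1..n}. \<Prod>i\<in>{1..n}. B2 i j)"
      by (rule prod.swap)
    also have "\<dots> = (\<Prod>j\<in>{1..n}. ypow j (- (int n - 1)))"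
    proof (intro prod.cong refl)
      fix j assume j: "j \<in> {1..n}"
      have "(\<Prod>i\<in>{1..n}. B2 i j) = (\<Prod>i\<in>{1..n}. if i = rho j then 1 else ypow j (-1))"
        unfolding B2_def using iff j by (intro prod.cong refl) auto
      also have "\<dots> = ypow j (-1) ^ (n - 1)" using prod_if_one[of "{1..n}" "rho j" "ypow j (-1)"] rrange[OF j] by simp
      also have "\<dots> = ypow j (- (int n - 1))" using n by (simp add: ypow_pow of_nat_diff)
      finally show "(\<Prod>i\<in>{1..n}. B2 i j) = ypow j (- (int n - 1))" .
    qed
    finally show ?thesis .
  qed
  have PC: "(\<Prod>i\<in>{1..n}. \<Prod>j\<in>{1..n}. C i j) = (if hd xs = n then 1 else Ep n a)"
  proof -
    have ne: "xs \<noteq> []" using P n by auto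
    have hd: "p n = hd xs" using P ne by (simp add: p_def pil_def hd_conv_nth)
    have nn: "n \<in> {1..n}" using n by simp
    have "(\<Prod>i\<in>{1..n}. \<Prod>j\<in>{1..n}. C i j) = (\<Prod>i\<in>{1..n}. if i = n then (if n \<noteq> p n then Ep n a else 1) else 1)"
      unfolding C_def by (intro prod.cong refl) (simp add: prod.delta nn)
    also have "\<dots> = (if n \<noteq> p n then Ep n a else 1)" using n by (simp add: prod.delta)
    finally show ?thesis using hd by auto
  qed
  have MB: "Mt n * ((\<Prod>i\<in>{1..n}. xpow i (int n - 1)) * (\<Prod>j\<in>{1..n}. ypow j (- (int n - 1)))) = Xall n"
  proof -
    have "Mt n * ((\<Prod>i\<in>{1..n}. xpow i (int n - 1)) * (\<Prod>j\<in>{1..n}. ypow j (- (int n - 1))))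
       = (\<Prod>i\<in>{1..n}. (xpow i (int n - 1) * xpow i (int n - 1)) * (ypow i (int n - 1) * ypow i (- (int n - 1))))"
      by (simp add: Mt_def prod.distrib[symmetric] mult_ac)
    also have "\<dots> = Xall n"
      unfolding Xall_def xpow_add ypow_add by (simp add: ypow_zero algebra_simps)
    finally show ?thesis .
  qed
  show ?thesis
    unfolding split PA PB1 PB2 PC MB[symmetric] by (simp add: mult_ac)
qed


lemma finite_dw: "finite (dw_states n)"
proof -
  have "dw_states n \<subseteq> (hedges n \<rightarrow>\<^sub>E (UNIV :: bool set)) \<times> (vedges n \<rightarrow>\<^sub>E (UNIV :: bool set))"
    by (auto simp: dw_states_def)
  moreover have "finite ((hedges n \<rightarrow>\<^sub>E (UNIV :: bool set)) \<times> (vedges n \<rightarrow>\<^sub>E (UNIV :: bool set)))"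
    by (intro finite_cartesian_product finite_PiE) (auto simp: hedges_def vedges_def)
  ultimately show ?thesis by (rule finite_subset)
qed

lemma prod_xpow_single:
  assumes "finite S"
  shows "(\<Prod>i\<in>S. xpow i (e i)) = Poly_Mapping.single (\<Sum>i\<in>S. Poly_Mapping.single (X i) (e i)) 1"
  using assms
proof (induction S rule: finite_induct)
  case empty
  then show ?case by simp
next
  case (insert x S)
  then show ?case by (simp add: xpow_def mult_single)
qed

lemma select_final:
  assumes n: "n \<ge> 1"
  shows "select_part n (lconst al * Xall n - lconst be * (Xall n * xpow n (-2) * ypow n 2))
       = lconst al * Xall n - lconst be * (Xall n * xpow n (-2) * ypow n 2)"
proof -
  define mX where "mX = (\<Sum>i\<in>{1..n}. Poly_Mapping.single (X i) (2 * (int n - 1)))"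
  have X: "Xall n = Poly_Mapping.single mX 1" unfolding Xall_def mX_def by (rule prod_xpow_single) simp
  have e1: "lconst al * Xall n = Poly_Mapping.single mX al" by (simp add: X lconst_def mult_single)
  have e2: "lconst be * (Xall n * xpow n (-2) * ypow n 2)
      = Poly_Mapping.single (mX + Poly_Mapping.single (X n) (-2) + Poly_Mapping.single (Y n) 2) be"
    by (simp add: X lconst_def xpow_def ypow_def mult_single)
  have lX: "Poly_Mapping.lookup mX (X k) = 2 * (int n - 1)" "Poly_Mapping.lookup mX (Y k) = 0"
    if "k \<in> {1..n-1}" for k
  proof -
    have k: "k \<in> {1..n}" using that by auto
    have "Poly_Mapping.lookup mX (X k) = (\<Sum>i\<in>{1..n}. if i = k then 2 * (int n - 1) else 0)"
      unfolding mX_def lookup_sum by (intro sum.cong refl) (auto simp: lookup_single when_def)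
    also have "\<dots> = 2 * (int n - 1)" using k by simp
    finally show "Poly_Mapping.lookup mX (X k) = 2 * (int n - 1)" .
    show "Poly_Mapping.lookup mX (Y k) = 0"
      unfolding mX_def lookup_sum by (simp add: lookup_single)
  qed
  have c1: "cnd n mX" using lX by (simp add: cnd_def)
  have c2: "cnd n (mX + Poly_Mapping.single (X n) (-2) + Poly_Mapping.single (Y n) 2)"
    unfolding cnd_def
  proof
    fix k assume k: "k \<in> {1..n-1}"
    then have kn: "k \<noteq> n" by auto
    show "Poly_Mapping.lookup (mX + Poly_Mapping.single (X n) (-2) + Poly_Mapping.single (Y n) 2) (X k) = 2 * (int n - 1) \<and>
          Poly_Mapping.lookup (mX + Poly_Mapping.single (X n) (-2) + Poly_Mapping.single (Y n) 2) (Y k) = 0"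
      using lX[OF k] kn by (simp add: lookup_add lookup_single)
  qed
  show ?thesis unfolding e1 e2 select_diff select_single using c1 c2 by simp
qed

lemma sum_G:
  assumes n: "n \<ge> 1"
  shows "(\<Sum>xs\<in>permutations_of_set {1..n}. (if hd xs = n then 0 else 1) * Kl a xs)
       = Qf a (n - 1) * (if n = 1 then 0 else a^2 * Sg a (n - 2))"
proof -
  let ?W = "\<lambda>p. \<Prod>j\<in>{1..n}-{p}. ww a p j"
  have ne: "{1..n} \<noteq> {}" using n by simp
  have "(\<Sum>xs\<in>permutations_of_set {1..n}. (if hd xs = n then 0 else 1) * Kl a xs)
      = (\<Sum>p\<in>{1..n}. (if p = n then 0 else 1) * ?W p * (\<Sum>ys\<in>permutations_of_set ({1..n}-{p}). Kl a ys))"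
    by (rule sum_perms[OF _ ne]) simp
  also have "\<dots> = (\<Sum>p\<in>{1..n}. (if p = n then 0 else 1) * ?W p * Qf a (n - 1))"
    by (intro sum.cong refl) (simp add: sum_Kl)
  also have "\<dots> = (\<Sum>p\<in>{1..n-1}. ?W p) * Qf a (n - 1)"
  proof -
    have ins: "{1..n} = insert n {1..n-1}" using n by auto
    have "(\<Sum>p\<in>{1..n}. (if p = n then 0 else 1) * ?W p * Qf a (n - 1))
        = (\<Sum>p\<in>{1..n-1}. (if p = n then 0 else 1) * ?W p * Qf a (n - 1))"
      unfolding ins by (subst sum.insert) auto
    also have "\<dots> = (\<Sum>p\<in>{1..n-1}. ?W p * Qf a (n - 1))" by (intro sum.cong refl) auto
    finally show ?thesis by (simp add: sum_distrib_right)
  qed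
  also have "(\<Sum>p\<in>{1..n-1}. ?W p) = (if n = 1 then 0 else a^2 * Sg a (n - 2))"
  proof (cases "n = 1")
    case True then show ?thesis by simp
  next
    case False
    have ins: "{1..n} = insert n {1..n-1}" using n by auto
    have "(\<Sum>p\<in>{1..n-1}. ?W p) = (\<Sum>p\<in>{1..n-1}. \<Prod>j\<in>insert n {1..n-1} - {p}. ww a p j)"
      unfolding ins ..
    also have "\<dots> = a^2 * (\<Sum>p\<in>{1..n-1}. \<Prod>j\<in>{1..n-1} - {p}. ww a p j)"
      by (rule Sum_ww_butmax) auto
    also have "\<dots> = a^2 * Sg a (card {1..n-1} - 1)"
      using False n by (subst Sum_ww) auto
    finally show ?thesis using False by (simp add: numeral_2_eq_2)
  qed
  finally show ?thesis by (simp add: mult.commute)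
qed

lemma coef_beta:
  assumes a: "a \<noteq> 0" and n: "n \<ge> 1"
  shows "sigma (a^2) ^ n * inverse a ^ 2 * (Qf a (n - 1) * (if n = 1 then 0 else a^2 * Sg a (n - 2)))
       = (\<Prod>i\<in>{1..n-1}. sigma (a ^ (2 * i))) * sigma (a ^ (2 * (n - 1)))"
proof (cases "n = 1")
  case True
  then show ?thesis by (simp add: sigma_def)
next
  case False
  then have n2: "n \<ge> 2" using n by simp
  obtain k where k: "n = Suc (Suc k)" using n2 by (metis add_2_eq_Suc le_Suc_ex)
  have "sigma (a^2) ^ n * inverse a ^ 2 * (Qf a (n - 1) * (a^2 * Sg a (n - 2)))
      = (sigma (a^2) ^ (Suc k) * Qf a (Suc k)) * (sigma (a^2) * Sg a k) * (inverse a ^ 2 * a ^ 2)"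
    unfolding k by (simp add: algebra_simps)
  also have "inverse a ^ 2 * a ^ 2 = 1" using a by (simp add: field_simps)
  also have "sigma (a^2) ^ (Suc k) * Qf a (Suc k) = (\<Prod>i\<in>{1..n-1}. sigma (a ^ (2 * i)))"
    unfolding sigma_Qf[OF a] k by simp
  also have "sigma (a^2) * Sg a k = sigma (a ^ (2 * (n - 1)))"
    unfolding sigma_Sg[OF a] k by simp
  finally show ?thesis using False by simp
qed

theorem lemma5:
  fixes a :: complex and n :: nat
  assumes "a \<noteq> 0" and "n \<ge> 1"
  shows "select_part n (Ztilde a n) =
    (\<Prod>i\<in>{1..n-1}. xpow i (2 * (int n - 1))) *
    (lconst (\<Prod>i\<in>{1..n-1}. sigma (a ^ (2 * i))) *
      (lconst (sigma (a ^ (2 * n))) * xpow n (2 * (int n - 1))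
       - lconst (sigma (a ^ (2 * (n - 1)))) * xpow n (2 * (int n - 2)) * ypow n 2))"
proof -
  note a = assms(1) and n = assms(2)
  define g where "g s = select_part n (Mt n * (\<Prod>i\<in>{1..n}. \<Prod>j\<in>{1..n}. tv a n (fst s) (snd s) i j))" for s
  define X2 where "X2 = Xall n * xpow n (-2) * ypow n 2"
  define PP where "PP = permutations_of_set {1..n}"
  define G where "G = {s \<in> dw_states n. goodS n s}"
  have "select_part n (Ztilde a n) = select_part n (Mt n * Zpf a n)"
    by (simp add: Ztilde_def Mt_def)
  also have "\<dots> = (\<Sum>s\<in>dw_states n. select_part n (Mt n * (case s of (H, V) \<Rightarrow> \<Prod>i\<in>{1..n}. \<Prod>j\<in>{1..n}. vweight a H V i j)))"
    by (simp add: Zpf_def sum_distrib_left select_sum)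
  also have "\<dots> = (\<Sum>s\<in>dw_states n. if goodS n s then g s else 0)"
  proof (intro sum.cong refl)
    fix s assume s: "s \<in> dw_states n"
    obtain H V where hv: "s = (H, V)" by fastforce
    show "select_part n (Mt n * (case s of (H, V) \<Rightarrow> \<Prod>i\<in>{1..n}. \<Prod>j\<in>{1..n}. vweight a H V i j)) = (if goodS n s then g s else 0)"
      unfolding hv g_def using state_select[OF s[unfolded hv] n] by simp
  qed
  also have "\<dots> = (\<Sum>s\<in>G. g s)"
    unfolding G_def by (rule sum.inter_filter[symmetric]) (rule finite_dw)
  also have "\<dots> = (\<Sum>xs\<in>PP. g (stH n xs, stV n xs))"
  proof (rule sum.reindex_bij_witness[where i="\<lambda>xs. (stH n xs, stV n xs)" and j="\<lambda>s. lst n (fst s)"])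
    fix s assume "s \<in> G"
    then obtain H V where hv: "s = (H, V)" "goodS n (H, V)" unfolding G_def by (cases s) auto
    show "(stH n (lst n (fst s)), stV n (lst n (fst s))) = s" using good_struct[OF hv(2)] hv(1) by simp
    show "lst n (fst s) \<in> PP" using good_struct[OF hv(2)] hv(1) by (simp add: PP_def)
    show "g (stH n (lst n (fst s)), stV n (lst n (fst s))) = g s" using good_struct[OF hv(2)] hv(1) by simp
  next
    fix xs assume xs: "xs \<in> PP"
    show "lst n (fst (stH n xs, stV n xs)) = xs" using lst_st xs by (simp add: PP_def)
    show "(stH n xs, stV n xs) \<in> G" using st_good xs by (simp add: G_def PP_def goodS_def)
  qed
  also have "\<dots> = (\<Sum>xs\<in>PP. select_part n (lconst (sigma (a^2) ^ n * Kl a xs) * Xall n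
                      - lconst (sigma (a^2) ^ n * inverse a ^ 2 * ((if hd xs = n then 0 else 1) * Kl a xs)) * X2))"
  proof (intro sum.cong refl)
    fix xs assume xs: "xs \<in> PP"
    have "lconst (sigma (a^2) ^ n * Kl a xs) * Xall n * (if hd xs = n then 1 else Ep n a)
        = lconst (sigma (a^2) ^ n * Kl a xs) * Xall n
          - lconst (sigma (a^2) ^ n * inverse a ^ 2 * ((if hd xs = n then 0 else 1) * Kl a xs)) * X2"
      by (cases "hd xs = n") (simp_all add: lconst_zero Ep_def X2_def lconst_mult algebra_simps)
    then show "g (stH n xs, stV n xs) = select_part n (lconst (sigma (a^2) ^ n * Kl a xs) * Xall n
                      - lconst (sigma (a^2) ^ n * inverse a ^ 2 * ((if hd xs = n then 0 else 1) * Kl a xs)) * X2)"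
      unfolding g_def using Mt_tv[OF xs[unfolded PP_def] n a] by simp
  qed
  also have "\<dots> = select_part n (lconst (sigma (a^2) ^ n * (\<Sum>xs\<in>PP. Kl a xs)) * Xall n
      - lconst (sigma (a^2) ^ n * inverse a ^ 2 * (\<Sum>xs\<in>PP. (if hd xs = n then 0 else 1) * Kl a xs)) * X2)"
    by (simp add: select_sum[symmetric] sum_subtractf sum_distrib_right[symmetric] lconst_sum[symmetric] sum_distrib_left[symmetric])
  also have "(\<Sum>xs\<in>PP. Kl a xs) = Qf a n" unfolding PP_def by (simp add: sum_Kl)
  also have "(\<Sum>xs\<in>PP. (if hd xs = n then 0 else 1) * Kl a xs) = Qf a (n - 1) * (if n = 1 then 0 else a^2 * Sg a (n - 2))"
    unfolding PP_def by (rule sum_G[OF n])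
  also have "sigma (a^2) ^ n * inverse a ^ 2 * (Qf a (n - 1) * (if n = 1 then 0 else a^2 * Sg a (n - 2)))
      = (\<Prod>i\<in>{1..n-1}. sigma (a ^ (2 * i))) * sigma (a ^ (2 * (n - 1)))" by (rule coef_beta[OF a n])
  also have "sigma (a^2) ^ n * Qf a n = (\<Prod>i\<in>{1..n}. sigma (a ^ (2 * i)))" by (rule sigma_Qf[OF a])
  also have "select_part n (lconst (\<Prod>i\<in>{1..n}. sigma (a ^ (2 * i))) * Xall n
      - lconst ((\<Prod>i\<in>{1..n-1}. sigma (a ^ (2 * i))) * sigma (a ^ (2 * (n - 1)))) * X2)
      = lconst (\<Prod>i\<in>{1..n}. sigma (a ^ (2 * i))) * Xall n
      - lconst ((\<Prod>i\<in>{1..n-1}. sigma (a ^ (2 * i))) * sigma (a ^ (2 * (n - 1)))) * X2"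
    unfolding X2_def by (rule select_final[OF n])
  also have "\<dots> = (\<Prod>i\<in>{1..n-1}. xpow i (2 * (int n - 1))) *
    (lconst (\<Prod>i\<in>{1..n-1}. sigma (a ^ (2 * i))) *
      (lconst (sigma (a ^ (2 * n))) * xpow n (2 * (int n - 1))
       - lconst (sigma (a ^ (2 * (n - 1)))) * xpow n (2 * (int n - 2)) * ypow n 2))"
  proof -
    have ins: "{1..n} = insert n {1..n-1}" using n by auto
    have nn: "n \<notin> {1..n-1}" by auto
    have XA: "Xall n = (\<Prod>i\<in>{1..n-1}. xpow i (2 * (int n - 1))) * xpow n (2 * (int n - 1))"
      unfolding Xall_def ins using nn by (simp add: mult.commute)
    have PS: "(\<Prod>i\<in>{1..n}. sigma (a ^ (2 * i))) = (\<Prod>i\<in>{1..n-1}. sigma (a ^ (2 * i))) * sigma (a ^ (2 * n))"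
      unfolding ins using nn by (simp add: mult.commute)
    have XX: "xpow n (2 * (int n - 1)) * xpow n (-2) = xpow n (2 * (int n - 2))"
      unfolding xpow_add by (simp add: algebra_simps)
    have X2e: "X2 = (\<Prod>i\<in>{1..n-1}. xpow i (2 * (int n - 1))) * xpow n (2 * (int n - 2)) * ypow n 2"
      unfolding X2_def XA XX[symmetric] by (simp add: mult_ac)
    show ?thesis unfolding XA PS X2e by (simp add: lconst_mult algebra_simps)
  qed
  finally show ?thesis .
qed

end
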